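(* Let $a<b$, $p>1$, $\theta=p$, $F(u)=\frac{1}{2\theta}|1-u^2|^{\theta}$, and let $E_\varepsilon[u]=\int_a^b\big[\frac{\varepsilon^{p-1}|u_x|^p}{p}+\frac{F(u)}{\varepsilon}\big]dx$. Let $N\in\mathbb{N}$ and let $v:[a,b]\to\{-1,1\}$ be piecewise constant with exactly $N$ jumps located at $a<h_1<\dots<h_N<b$. Let $r>0$ satisfy $r<\frac{h_{i+1}-h_i}{2}$ for $i=1,\dots,N-1$, $a\le h_1-r$ and $h_N+r\le b$, let $\lambda_p:=2^{1-1/p}(p-1)^{-1/p}$, and fix $A\in(0,r\sqrt2\lambda_p)$. Then there exist $\varepsilon_0,C,\delta>0$ (depending only on $p,v,A$) such that, if $u\in H^1(a,b)$ satisfies $\|\tilde u-\tilde v\|_{L^1(a,b)}\le\delta$, then for every $\varepsilon\in(0,\varepsilon_0)$ $$E_\varepsilon[u]\ge Nc_p-C\exp(-Ap/2\varepsilon).$$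
   Context: For a function $w$ on $[a,b]$, $\tilde w(x):=\int_a^x w(y)\,dy$. The constant $c_p$ is $c_p:=\left(\frac{p}{p-1}\right)^{\frac{p-1}{p}}\int_{-1}^{1}F(s)^{\frac{p-1}{p}}ds$. *)

theory Defs
  imports "HOL-Analysis.Analysis"
begin

definition Fpot :: "real \<Rightarrow> real \<Rightarrow> real" where
  "Fpot p s = \<bar>1 - s\<^sup>2\<bar> powr p / (2 * p)"

definition c_const :: "real \<Rightarrow> real" where
  "c_const p = (p / (p - 1)) powr ((p - 1) / p) *
      (\<integral> s\<in>{-1..1}. (Fpot p s) powr ((p - 1) / p) \<partial>lborel)"

definition lambda_const :: "real \<Rightarrow> real" where
  "lambda_const p = 2 powr (1 - 1 / p) * (p - 1) powr (- 1 / p)"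

text \<open>Energy E_eps[u] on (a,b); g is the weak derivative u_x.
  Valued in [0,infinity] since |u_x|^p need not be integrable for u in H^1.\<close>
definition energy :: "real \<Rightarrow> real \<Rightarrow> real \<Rightarrow> real \<Rightarrow> (real \<Rightarrow> real) \<Rightarrow> (real \<Rightarrow> real) \<Rightarrow> ennreal" where
  "energy p a b \<epsilon> u g = (\<integral>\<^sup>+ x\<in>{a..b}.
      ennreal (\<epsilon> powr (p - 1) * \<bar>g x\<bar> powr p / p + Fpot p (u x) / \<epsilon>) \<partial>lborel)"

text \<open>u in H^1(a,b) with weak derivative g: g Borel measurable, square integrable
  (hence integrable) on (a,b), and u(x) = u(a) + int_a^x g on [a,b]
  (u is identified with its absolutely continuous representative).\<close>
definition H1_with_deriv :: "real \<Rightarrow> real \<Rightarrow> (real \<Rightarrow> real) \<Rightarrow> (real \<Rightarrow> real) \<Rightarrow> bool" where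
  "H1_with_deriv a b u g \<longleftrightarrow>
     g \<in> borel_measurable borel \<and>
     set_integrable lborel {a..b} g \<and>
     set_integrable lborel {a..b} (\<lambda>x. (g x)\<^sup>2) \<and>
     (\<forall>x\<in>{a..b}. u x = u a + (\<integral> y\<in>{a..x}. g y \<partial>lborel))"

text \<open>Primitive tilde w(x) = int_a^x w.\<close>
definition prim :: "real \<Rightarrow> (real \<Rightarrow> real) \<Rightarrow> real \<Rightarrow> real" where
  "prim a w x = (\<integral> y\<in>{a..x}. w y \<partial>lborel)"

end

theory Submission
  imports Defs
begin

lemma deriv_prod2:
  fixes M D :: "real \<Rightarrow> real"
  assumes "(M has_real_derivative M') (at x)" "(D has_real_derivative d) (at s)"
  shows "((\<lambda>z. M (fst z) * D (snd z)) has_derivative (\<lambda>h. M' * fst h * D s + M x * (d * snd h))) (at (x, s))"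
proof -
  have 1: "((\<lambda>z. M (fst z)) has_derivative (\<lambda>h. fst h * M')) (at (x, s))"
    using DERIV_compose_FDERIV[where g=fst and x="(x,s)", OF _ has_derivative_fst[OF has_derivative_ident]] assms(1)
    by simp
  have 2: "((\<lambda>z. D (snd z)) has_derivative (\<lambda>h. snd h * d)) (at (x, s))"
    using DERIV_compose_FDERIV[where g=snd and x="(x,s)", OF _ has_derivative_snd[OF has_derivative_ident]] assms(2)
    by simp
  show ?thesis using has_derivative_mult[OF 1 2] by (simp add: algebra_simps)
qed

lemma le_by_eps:
  fixes X Y K :: real
  assumes "K \<ge> 0" "\<And>e. e > 0 \<Longrightarrow> X \<le> Y + e * K"
  shows "X \<le> Y"
proof (rule ccontr)
  assume "\<not> X \<le> Y"
  define e where "e = (X - Y) / (2 * (K + 1))"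
  have e: "e > 0" using \<open>\<not> X \<le> Y\<close> assms(1) by (simp add: e_def)
  have "e * K < X - Y"
  proof -
    have "e * K \<le> e * (K + 1)" using e by simp
    also have "\<dots> = (X - Y) / 2" using assms(1) by (simp add: e_def field_simps)
    finally show ?thesis using \<open>\<not> X \<le> Y\<close> by simp
  qed
  with assms(2)[OF e] show False by simp
qed

lemma calib:
  fixes M M' D d u g f :: "real \<Rightarrow> real" and x0 x1 :: real
  assumes x01: "x0 \<le> x1"
    and dM: "\<And>x. (M has_real_derivative M' x) (at x)"
    and dD: "\<And>s. (D has_real_derivative d s) (at s)"
    and cM': "continuous_on {x0..x1} M'"
    and cd: "continuous_on UNIV d"
    and cu: "continuous_on {x0..x1} u"
    and rep: "\<And>x y. x0 \<le> x \<Longrightarrow> x \<le> y \<Longrightarrow> y \<le> x1 \<Longrightarrow> u y - u x = integral {x..y} g"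
    and gi: "g absolutely_integrable_on {x0..x1}"
    and fi: "f integrable_on {x0..x1}"
    and hj: "\<And>x. x \<in> {x0..x1} \<Longrightarrow> M' x * D (u x) + M x * d (u x) * g x \<le> f x"
  shows "M x1 * D (u x1) - M x0 * D (u x0) \<le> integral {x0..x1} f"
proof -
  define W where "W t = M t * D (u t)" for t
  define ag where "ag = (\<lambda>t. \<bar>g t\<bar>)"
  have gI: "g integrable_on {x0..x1}" and agI: "ag integrable_on {x0..x1}"
    using gi by (auto simp: absolutely_integrable_on_def ag_def)
  have cM: "continuous_on {x0..x1} M"
    using dM by (meson DERIV_isCont continuous_at_imp_continuous_on)
  have cD: "continuous_on UNIV D"
    using dD by (meson DERIV_isCont continuous_at_imp_continuous_on)
  have main: "W x1 - W x0 \<le> integral {x0..x1} f + \<eta> * ((x1 - x0) + integral {x0..x1} ag)"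
    if eta: "\<eta> > 0" for \<eta>
  proof -
    define P where "P a b \<longleftrightarrow> (x0 \<le> a \<longrightarrow> b \<le> x1 \<longrightarrow>
        W b - W a \<le> integral {a..b} f + \<eta> * ((b - a) + integral {a..b} ag))" for a b
    have "P x0 x1"
    proof (induct rule: Bolzano[OF x01])
      case (1 a b c)
      show ?case unfolding P_def
      proof (intro impI)
        assume a: "x0 \<le> a" and c: "c \<le> x1"
        have fac: "integral {a..c} f = integral {a..b} f + integral {b..c} f"
          using Henstock_Kurzweil_Integration.integral_combine[where a=a and c=b and b=c and f=f] 1 a c integrable_subinterval_real[OF fi, of a c] by simp
        have gac: "integral {a..c} ag = integral {a..b} ag + integral {b..c} ag"
          using Henstock_Kurzweil_Integration.integral_combine[where a=a and c=b and b=c and f=ag] 1 a c integrable_subinterval_real[OF agI, of a c] by simp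
        have "W b - W a \<le> integral {a..b} f + \<eta> * ((b - a) + integral {a..b} ag)"
          using 1 a c unfolding P_def by simp
        moreover have "W c - W b \<le> integral {b..c} f + \<eta> * ((c - b) + integral {b..c} ag)"
          using 1 a c unfolding P_def by simp
        ultimately show "W c - W a \<le> integral {a..c} f + \<eta> * ((c - a) + integral {a..c} ag)"
          unfolding fac gac by (simp add: algebra_simps)
      qed
    next
      case (2 x)
      let ?c1 = "M' x * D (u x)" and ?c2 = "M x * d (u x)"
      have e2: "\<eta>/2 > 0" using eta by simp
      have hd: "((\<lambda>z. M (fst z) * D (snd z)) has_derivative (\<lambda>h. M' x * fst h * D (u x) + M x * (d (u x) * snd h))) (at (x, u x))"
        by (rule deriv_prod2[OF dM dD])
      then obtain d1 where d1: "d1 > 0" and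
        d1b: "\<And>y. norm (y - (x, u x)) < d1 \<Longrightarrow>
           norm (M (fst y) * D (snd y) - M x * D (u x) - (M' x * fst (y - (x, u x)) * D (u x) + M x * (d (u x) * snd (y - (x, u x)))))
             \<le> \<eta>/2 * norm (y - (x, u x))"
        using e2 unfolding has_derivative_within_alt by fastforce
      have "continuous (at x within {x0..x1}) u" using cu 2 by (simp add: continuous_on_eq_continuous_within)
      then obtain d2 where d2: "d2 > 0" and d2b: "\<And>t. t \<in> {x0..x1} \<Longrightarrow> \<bar>t - x\<bar> < d2 \<Longrightarrow> \<bar>u t - u x\<bar> < d1/2"
        using d1 unfolding continuous_within_eps_delta dist_real_def
        by (metis half_gt_zero)
      have cc1: "continuous_on {x0..x1} (\<lambda>t. M' t * D (u t))"
        by (intro continuous_intros cM' continuous_on_compose2[OF cD cu]) auto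
      have cc2: "continuous_on {x0..x1} (\<lambda>t. M t * d (u t))"
        by (intro continuous_intros cM continuous_on_compose2[OF cd cu]) auto
      obtain d3 where d3: "d3 > 0" and d3b: "\<And>t. t \<in> {x0..x1} \<Longrightarrow> \<bar>t - x\<bar> < d3 \<Longrightarrow> \<bar>M' t * D (u t) - ?c1\<bar> < \<eta>/2"
        using cc1 2 e2 unfolding continuous_on_iff dist_real_def by (metis atLeastAtMost_iff)
      obtain d4 where d4: "d4 > 0" and d4b: "\<And>t. t \<in> {x0..x1} \<Longrightarrow> \<bar>t - x\<bar> < d4 \<Longrightarrow> \<bar>M t * d (u t) - ?c2\<bar> < \<eta>/2"
        using cc2 2 e2 unfolding continuous_on_iff dist_real_def by (metis atLeastAtMost_iff)
      define dd where "dd = Min {d1/2, d2, d3, d4}"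
      have dd: "dd > 0" "dd \<le> d1/2" "dd \<le> d2" "dd \<le> d3" "dd \<le> d4"
        using d1 d2 d3 d4 by (auto simp: dd_def)
      have Eb: "\<bar>W t - W x - ?c1 * (t - x) - ?c2 * (u t - u x)\<bar> \<le> \<eta>/2 * (\<bar>t - x\<bar> + \<bar>u t - u x\<bar>)"
        if t: "t \<in> {x0..x1}" "\<bar>t - x\<bar> < dd" for t
      proof -
        have n: "norm ((t, u t) - (x, u x)) \<le> \<bar>t - x\<bar> + \<bar>u t - u x\<bar>"
          using norm_Pair_le[of "t - x" "u t - u x"] by simp
        have "\<bar>u t - u x\<bar> < d1/2" using d2b[OF t(1)] t dd by simp
        then have "norm ((t, u t) - (x, u x)) < d1" using n t dd by simp
        from d1b[OF this]
        have "\<bar>W t - W x - ?c1 * (t - x) - ?c2 * (u t - u x)\<bar> \<le> \<eta>/2 * norm ((t, u t) - (x, u x))"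
          by (simp add: W_def algebra_simps)
        also have "\<dots> \<le> \<eta>/2 * (\<bar>t - x\<bar> + \<bar>u t - u x\<bar>)"
          using n e2 by (intro mult_left_mono) auto
        finally show ?thesis .
      qed
      show ?case
      proof (intro exI[of _ dd] conjI allI impI dd(1))
        fix a b assume ab: "a \<le> x \<and> x \<le> b \<and> b - a < dd"
        show "P a b" unfolding P_def
        proof (intro impI)
          assume a: "x0 \<le> a" and b: "b \<le> x1"
          have ta: "a \<in> {x0..x1}" "\<bar>a - x\<bar> < dd" using a b ab by auto
          have tb: "b \<in> {x0..x1}" "\<bar>b - x\<bar> < dd" using a b ab by auto
          have fab: "f integrable_on {a..b}" using integrable_subinterval_real[OF fi] a b by auto
          have gab: "g integrable_on {a..b}" using integrable_subinterval_real[OF gI] a b by auto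
          have agab: "ag integrable_on {a..b}" using integrable_subinterval_real[OF agI] a b by auto
          have ug: "u b - u a = integral {a..b} g" using rep a b ab by auto
          have uxa: "\<bar>u x - u a\<bar> \<le> integral {a..x} ag"
          proof -
            have "u x - u a = integral {a..x} g" using rep a b ab by auto
            moreover have "norm (integral {a..x} g) \<le> integral {a..x} ag"
              using integrable_subinterval_real[OF gI, of a x] integrable_subinterval_real[OF agI, of a x] a b ab
              by (intro integral_norm_bound_integral) (auto simp: ag_def)
            ultimately show ?thesis by simp
          qed
          have uxb: "\<bar>u b - u x\<bar> \<le> integral {x..b} ag"
          proof -
            have "u b - u x = integral {x..b} g" using rep a b ab by auto
            moreover have "norm (integral {x..b} g) \<le> integral {x..b} ag"
              using integrable_subinterval_real[OF gI, of x b] integrable_subinterval_real[OF agI, of x b] a b ab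
              by (intro integral_norm_bound_integral) (auto simp: ag_def)
            ultimately show ?thesis by simp
          qed
          have agsplit: "integral {a..b} ag = integral {a..x} ag + integral {x..b} ag"
            using Henstock_Kurzweil_Integration.integral_combine[where a=a and c=x and b=b and f=ag] ab agab by simp
          have Wdiff: "W b - W a \<le> ?c1 * (b - a) + ?c2 * (u b - u a) + \<eta>/2 * ((b - a) + integral {a..b} ag)"
          proof -
            have 1: "\<bar>W b - W x - ?c1 * (b - x) - ?c2 * (u b - u x)\<bar> \<le> \<eta>/2 * (\<bar>b - x\<bar> + \<bar>u b - u x\<bar>)"
              by (rule Eb[OF tb])
            have 2: "\<bar>W a - W x - ?c1 * (a - x) - ?c2 * (u a - u x)\<bar> \<le> \<eta>/2 * (\<bar>a - x\<bar> + \<bar>u a - u x\<bar>)"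
              by (rule Eb[OF ta])
            have 3: "\<eta>/2 * (\<bar>b - x\<bar> + \<bar>u b - u x\<bar>) + \<eta>/2 * (\<bar>a - x\<bar> + \<bar>u a - u x\<bar>)
                 \<le> \<eta>/2 * ((b - a) + integral {a..b} ag)"
            proof -
              have "\<bar>b - x\<bar> + \<bar>u b - u x\<bar> + (\<bar>a - x\<bar> + \<bar>u a - u x\<bar>) \<le> (b - a) + integral {a..b} ag"
                using uxa uxb agsplit ab by (simp add: abs_minus_commute)
              then show ?thesis using e2 by (simp add: distrib_left[symmetric])
            qed
            show ?thesis using 1 2 3 by (simp add: abs_le_iff algebra_simps)
          qed
          have lowf: "(?c1 - \<eta>/2) * (b - a) + ?c2 * (u b - u a) - \<eta>/2 * integral {a..b} ag \<le> integral {a..b} f"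
          proof -
            have pw: "(?c1 - \<eta>/2) + ?c2 * g t - \<eta>/2 * ag t \<le> f t" if t: "t \<in> {a..b}" for t
            proof -
              have tt: "t \<in> {x0..x1}" "\<bar>t - x\<bar> < dd" using t a b ab by auto
              have h1: "\<bar>M' t * D (u t) - ?c1\<bar> < \<eta>/2" using d3b tt dd by simp
              have h2: "\<bar>M t * d (u t) - ?c2\<bar> < \<eta>/2" using d4b tt dd by simp
              have "\<bar>M t * d (u t) * g t - ?c2 * g t\<bar> \<le> \<eta>/2 * ag t"
                using h2 unfolding ag_def
                by (metis abs_ge_zero abs_mult left_diff_distrib less_imp_le mult_right_mono)
              then show ?thesis using hj[OF tt(1)] h1 unfolding abs_le_iff abs_less_iff by linarith
            qed
            have int1: "((\<lambda>t. (?c1 - \<eta>/2) + ?c2 * g t - \<eta>/2 * ag t) has_integral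
                ((?c1 - \<eta>/2) * (b - a) + ?c2 * integral {a..b} g - \<eta>/2 * integral {a..b} ag)) {a..b}"
              using ab
              by (intro has_integral_diff has_integral_add has_integral_mult_right integrable_integral gab agab)
                 (use has_integral_const_real[of "?c1 - \<eta>/2" a b] in \<open>auto simp: mult.commute\<close>)
            have "(?c1 - \<eta>/2) * (b - a) + ?c2 * integral {a..b} g - \<eta>/2 * integral {a..b} ag \<le> integral {a..b} f"
              using has_integral_le[OF int1 integrable_integral[OF fab]] pw by blast
            then show ?thesis using ug by simp
          qed
          show "W b - W a \<le> integral {a..b} f + \<eta> * ((b - a) + integral {a..b} ag)"
          proof -
            have e1: "(?c1 - \<eta>/2) * (b - a) = ?c1*(b-a) - \<eta>/2*(b-a)" by (simp add: algebra_simps)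
            have e2: "\<eta>/2 * (b - a + integral {a..b} ag) = \<eta>/2*(b-a) + \<eta>/2*integral {a..b} ag"
              by (rule distrib_left)
            have e3: "\<eta> * (b - a + integral {a..b} ag) = \<eta>/2*(b-a) + \<eta>/2*(b-a) + \<eta>/2*integral {a..b} ag + \<eta>/2*integral {a..b} ag"
            proof -
              have "\<eta>/2*(b-a) + \<eta>/2*(b-a) = \<eta>*(b-a)" by simp
              moreover have "\<eta>/2*integral {a..b} ag + \<eta>/2*integral {a..b} ag = \<eta>*integral {a..b} ag" by simp
              ultimately show ?thesis by (simp add: algebra_simps)
            qed
            show ?thesis using Wdiff lowf unfolding e1 e2 e3 by linarith
          qed
        qed
      qed
    qed
    then show ?thesis unfolding P_def by simp
  qed
  have K0: "0 \<le> (x1 - x0) + integral {x0..x1} ag"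
    using x01 by (intro add_nonneg_nonneg integral_nonneg agI) (auto simp: ag_def)
  have "W x1 - W x0 \<le> integral {x0..x1} f"
    by (rule le_by_eps[OF K0 main])
  then show ?thesis by (simp add: W_def)
qed

definition phi :: "real \<Rightarrow> real \<Rightarrow> real" where
  "phi p s = (p / (p - 1)) powr ((p - 1) / p) * (Fpot p s) powr ((p - 1) / p)"

definition Phi :: "real \<Rightarrow> real \<Rightarrow> real" where
  "Phi p s = integral {0..s} (phi p) - integral {s..0} (phi p)"

definition ee :: "real \<Rightarrow> real \<Rightarrow> real \<Rightarrow> real \<Rightarrow> real" where
  "ee p \<epsilon> s t = \<epsilon> powr (p - 1) * \<bar>t\<bar> powr p / p + Fpot p s / \<epsilon>"

definition kphi :: "real \<Rightarrow> real" where
  "kphi p = (p / (p - 1)) powr ((p - 1) / p) / (2 * p) powr ((p - 1) / p)"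

lemma Fpot_nonneg: "p > 0 \<Longrightarrow> Fpot p s \<ge> 0"
  by (simp add: Fpot_def)

lemma Fpot_even: "Fpot p (- s) = Fpot p s"
  by (simp add: Fpot_def)

lemma Fpot_cont: "p > 0 \<Longrightarrow> continuous_on UNIV (Fpot p)"
  unfolding Fpot_def[abs_def]
  by (intro continuous_intros continuous_on_powr') auto

lemma phi_nonneg: "phi p s \<ge> 0"
  by (simp add: phi_def)

lemma phi_even: "phi p (- s) = phi p s"
  by (simp add: phi_def Fpot_even)

lemma phi_cont: assumes "p > 1" shows "continuous_on UNIV (phi p)"
proof -
  have "continuous_on UNIV (\<lambda>s. Fpot p s powr ((p - 1) / p))"
    by (rule continuous_on_powr'[OF Fpot_cont continuous_on_const]) (use assms in \<open>auto simp: Fpot_nonneg\<close>)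
  then show ?thesis unfolding phi_def[abs_def] by (rule continuous_on_mult[OF continuous_on_const])
qed

lemma phi_formula: assumes "p > 1" shows "phi p s = kphi p * \<bar>1 - s\<^sup>2\<bar> powr (p - 1)"
proof -
  have "Fpot p s powr ((p - 1) / p) = (\<bar>1 - s\<^sup>2\<bar> powr p) powr ((p - 1) / p) / (2 * p) powr ((p - 1) / p)"
    by (simp add: Fpot_def powr_divide)
  also have "(\<bar>1 - s\<^sup>2\<bar> powr p) powr ((p - 1) / p) = \<bar>1 - s\<^sup>2\<bar> powr (p - 1)"
    using assms by (simp add: powr_powr)
  finally show ?thesis by (simp add: phi_def kphi_def)
qed

lemma kphi_pos: "p > 1 \<Longrightarrow> kphi p > 0"
  by (simp add: kphi_def)

lemma phi_pow: assumes "p > 1" shows "(phi p s) powr (p / (p - 1)) = (p / (p - 1)) * Fpot p s"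
proof -
  have e: "(p - 1) / p * (p / (p - 1)) = 1" using assms by (simp add: field_simps)
  have "(phi p s) powr (p / (p - 1)) =
     ((p / (p - 1)) powr ((p - 1) / p)) powr (p / (p - 1)) * ((Fpot p s) powr ((p - 1) / p)) powr (p / (p - 1))"
    by (simp add: phi_def powr_mult)
  also have "\<dots> = (p / (p - 1)) * Fpot p s"
    using assms e by (simp add: powr_powr Fpot_nonneg)
  finally show ?thesis .
qed

lemma Phi_deriv: assumes "p > 1" shows "(Phi p has_real_derivative phi p s) (at s)"
proof -
  define T where "T = \<bar>s\<bar> + 1"
  define G where "G y = integral {-T..y} (phi p)" for y
  have cT: "continuous_on {-T..T} (phi p)" using phi_cont[OF assms] by (rule continuous_on_subset) auto
  have sin: "s \<in> {-T..T}" "-T < s" "s < T" by (auto simp: T_def)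
  have "(G has_real_derivative phi p s) (at s within {-T..T})"
    unfolding G_def by (rule integral_has_real_derivative[OF cT sin(1)])
  then have dG: "(G has_real_derivative phi p s) (at s)"
    using sin by (simp add: at_within_Icc_at)
  have dG0: "((\<lambda>y. G y - G 0) has_real_derivative phi p s) (at s)"
    using dG by (auto intro!: derivative_eq_intros)
  have eq: "G y - G 0 = Phi p y" if "y \<in> {-T<..<T}" for y
  proof (cases "y \<ge> 0")
    case True
    have "integral {-T..0} (phi p) + integral {0..y} (phi p) = integral {-T..y} (phi p)"
      using True that integrable_continuous_real[OF continuous_on_subset[OF phi_cont[OF assms]]]
      by (intro Henstock_Kurzweil_Integration.integral_combine) (auto simp: T_def)
    moreover have "integral {y..0} (phi p) = 0"
      using True by (cases "y = 0") auto
    ultimately show ?thesis by (simp add: G_def Phi_def)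
  next
    case False
    have "integral {-T..y} (phi p) + integral {y..0} (phi p) = integral {-T..0} (phi p)"
      using False that integrable_continuous_real[OF continuous_on_subset[OF phi_cont[OF assms]]]
      by (intro Henstock_Kurzweil_Integration.integral_combine) (auto simp: T_def)
    moreover have "integral {0..y} (phi p) = 0"
      using False by simp
    ultimately show ?thesis by (simp add: G_def Phi_def)
  qed
  show ?thesis
    by (rule has_field_derivative_transform_within_open[OF dG0, of "{-T<..<T}"]) (use sin eq in auto)
qed

lemma Phi_cont: "p > 1 \<Longrightarrow> continuous_on UNIV (Phi p)"
  using Phi_deriv by (meson DERIV_isCont continuous_at_imp_continuous_on)

lemma Phi_mono: assumes "p > 1" "x \<le> y" shows "Phi p x \<le> Phi p y"
  using assms(2)
  by (rule DERIV_nonneg_imp_increasing_open) (use Phi_deriv[OF assms(1)] phi_nonneg Phi_cont[OF assms(1)] in \<open>auto intro: continuous_on_subset\<close>)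

lemma Phi_zero: "Phi p 0 = 0"
  by (simp add: Phi_def)

lemma Phi_odd: assumes "p > 1" shows "Phi p (- s) = - Phi p s"
proof -
  have "\<forall>x. ((\<lambda>s. Phi p (- s) + Phi p s) has_real_derivative 0) (at x)"
  proof
    fix x
    have d1: "((\<lambda>z. Phi p (- z)) has_real_derivative phi p (- x) * (- 1)) (at x)"
      by (rule DERIV_chain2[OF Phi_deriv[OF assms]]) (auto intro!: derivative_eq_intros)
    have "((\<lambda>s. Phi p (- s) + Phi p s) has_real_derivative (phi p (- x) * (- 1) + phi p x)) (at x)"
      by (rule DERIV_add[OF d1 Phi_deriv[OF assms]])
    then show "((\<lambda>s. Phi p (- s) + Phi p s) has_real_derivative 0) (at x)"
      by (simp add: phi_even)
  qed
  from DERIV_isconst_all[OF this, of s 0] show ?thesis by (simp add: Phi_zero)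
qed

lemma c_const_Phi: assumes "p > 1" shows "c_const p = Phi p 1 - Phi p (-1)"
proof -
  have ci: "continuous_on {-1..1} (phi p)" using phi_cont[OF assms] by (rule continuous_on_subset) auto
  have si: "set_integrable lborel {-1..1::real} (phi p)"
    by (rule borel_integrable_atLeastAtMost') (rule ci)
  have "c_const p = (LINT s:{-1..1}|lborel. phi p s)"
    unfolding c_const_def phi_def by (simp add: set_integral_mult_right)
  also have "\<dots> = integral {-1..1} (phi p)"
    by (rule set_borel_integral_eq_integral(2)[OF si])
  also have "\<dots> = integral {-1..0} (phi p) + integral {0..1} (phi p)"
    using integrable_continuous_real[OF ci]
    by (intro Henstock_Kurzweil_Integration.integral_combine[symmetric]) auto
  also have "\<dots> = Phi p 1 - Phi p (-1)" by (simp add: Phi_def)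
  finally show ?thesis .
qed

lemma phi_decr: assumes "p > 1" "0 \<le> s" "s \<le> t" "t \<le> 1" shows "phi p t \<le> phi p s"
proof -
  have st: "s * s \<le> t * t" using assms by (intro mult_mono) auto
  have t1: "t * t \<le> 1" using assms by (intro mult_le_one) auto
  have "\<bar>1 - t\<^sup>2\<bar> \<le> \<bar>1 - s\<^sup>2\<bar>"
    using st t1 by (simp add: power2_eq_square)
  then have "\<bar>1 - t\<^sup>2\<bar> powr (p - 1) \<le> \<bar>1 - s\<^sup>2\<bar> powr (p - 1)"
    using assms by (intro powr_mono2) auto
  then show ?thesis using kphi_pos[OF assms(1)] by (simp add: phi_formula[OF assms(1)])
qed

lemma Phi_tail_compare:
  assumes p: "p > 1" and r: "0 < \<rho>" "\<rho> \<le> 1/2"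
  shows "Phi p 1 - Phi p (1 - \<rho>) \<le> Phi p (1 - \<rho>) - Phi p (1 - 2 * \<rho>)"
proof -
  obtain z where z: "1 - \<rho> < z" "z < 1" "Phi p 1 - Phi p (1 - \<rho>) = (1 - (1 - \<rho>)) * phi p z"
    using MVT2[of "1 - \<rho>" 1 "Phi p" "phi p"] Phi_deriv[OF p] r by auto
  obtain z' where z': "1 - 2 * \<rho> < z'" "z' < 1 - \<rho>" "Phi p (1 - \<rho>) - Phi p (1 - 2 * \<rho>) = ((1 - \<rho>) - (1 - 2 * \<rho>)) * phi p z'"
    using MVT2[of "1 - 2 * \<rho>" "1 - \<rho>" "Phi p" "phi p"] Phi_deriv[OF p] r by auto
  have "phi p z \<le> phi p (1 - \<rho>)" using phi_decr[OF p, of "1 - \<rho>" z] z r by auto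
  moreover have "phi p (1 - \<rho>) \<le> phi p z'" using phi_decr[OF p, of z' "1 - \<rho>"] z' r by auto
  ultimately show ?thesis using z(3) z'(3) r by (simp add: mult_left_mono)
qed

definition Rr :: "real \<Rightarrow> real \<Rightarrow> real" where
  "Rr p \<rho> = kphi p * 2 powr p / (2 - 2 * \<rho>) powr p"

lemma Phi_def_bound:
  assumes p: "p > 1" and r: "0 < \<rho>" "\<rho> \<le> 1/2" and s: "1 - 2 * \<rho> \<le> s" "s \<le> 1"
  shows "Phi p 1 - Phi p s \<le> Rr p \<rho> * Fpot p s"
proof -
  define K where "K = kphi p * 2 powr (p - 1) / p"
  have Kpos: "K > 0" using kphi_pos[OF p] p by (simp add: K_def)
  have a: "Phi p 1 - Phi p s \<le> K * (1 - s) powr p"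
  proof -
    define H where "H t = - (K * (1 - t) powr p) - Phi p t" for t
    have "H s \<le> H 1"
    proof (rule DERIV_nonneg_imp_increasing_open[OF s(2)])
      fix t assume t: "s < t" "t < 1"
      have dpow: "((\<lambda>t. (1 - t) powr p) has_real_derivative (p * (1 - t) powr (p - 1) * (- 1))) (at t)"
        using t by (auto intro!: derivative_eq_intros simp: powr_diff)
      have dH: "(H has_real_derivative (K * p * (1 - t) powr (p - 1) - phi p t)) (at t)"
        unfolding H_def[abs_def]
        by (rule derivative_eq_intros dpow Phi_deriv[OF p] | simp)+
      have "phi p t \<le> K * p * (1 - t) powr (p - 1)"
      proof -
        have e: "1 - t\<^sup>2 = (1 - t) * (1 + t)" by (simp add: power2_eq_square algebra_simps)
        have "(1 - t) * (1 + t) \<ge> 0" using t s r by (intro mult_nonneg_nonneg) auto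
        then have "\<bar>1 - t\<^sup>2\<bar> = (1 - t) * (1 + t)" by (simp add: e)
        then have "\<bar>1 - t\<^sup>2\<bar> powr (p - 1) = (1 - t) powr (p - 1) * (1 + t) powr (p - 1)"
          by (simp add: powr_mult)
        also have "\<dots> \<le> (1 - t) powr (p - 1) * 2 powr (p - 1)"
          using t s r p by (intro mult_left_mono powr_mono2) auto
        finally have "\<bar>1 - t\<^sup>2\<bar> powr (p - 1) \<le> (1 - t) powr (p - 1) * 2 powr (p - 1)" .
        then show ?thesis using kphi_pos[OF p] p
          by (simp add: phi_formula[OF p] K_def mult_left_mono mult.commute mult.left_commute)
      qed
      then show "\<exists>y. (H has_real_derivative y) (at t) \<and> 0 \<le> y" using dH by auto
    next
      have "continuous_on {s..1} (\<lambda>t. (1 - t) powr p)"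
        using p by (intro continuous_on_powr' continuous_intros) auto
      moreover have "continuous_on {s..1} (Phi p)" by (rule continuous_on_subset[OF Phi_cont[OF p]]) auto
      ultimately show "continuous_on {s..1} H" unfolding H_def[abs_def]
        by (intro continuous_on_diff continuous_on_minus continuous_on_mult_left)
    qed
    then show ?thesis by (simp add: H_def)
  qed
  have b: "(1 - s) powr p * (2 - 2 * \<rho>) powr p / (2 * p) \<le> Fpot p s"
  proof -
    have e: "1 - s\<^sup>2 = (1 - s) * (1 + s)" by (simp add: power2_eq_square algebra_simps)
    have "(1 - s) * (1 + s) \<ge> 0" using s r by (intro mult_nonneg_nonneg) auto
    then have "\<bar>1 - s\<^sup>2\<bar> = (1 - s) * (1 + s)" by (simp add: e)
    then have "\<bar>1 - s\<^sup>2\<bar> powr p = (1 - s) powr p * (1 + s) powr p" by (simp add: powr_mult)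
    moreover have "(2 - 2 * \<rho>) powr p \<le> (1 + s) powr p" using s r p by (intro powr_mono2) auto
    ultimately show ?thesis using p unfolding Fpot_def
      by (simp add: divide_right_mono mult_left_mono)
  qed
  have c: "K * (1 - s) powr p = Rr p \<rho> * ((1 - s) powr p * (2 - 2 * \<rho>) powr p / (2 * p))"
  proof -
    have pos: "(2 - 2 * \<rho>) powr p > 0" using r by simp
    have "2 powr p = 2 * 2 powr (p - 1)" by (simp add: powr_diff)
    then show ?thesis using pos p by (simp add: K_def Rr_def field_simps)
  qed
  have Rpos: "Rr p \<rho> \<ge> 0" using kphi_pos[OF p] by (simp add: Rr_def)
  show ?thesis using a b c Rpos by (metis mult_left_mono order_trans)
qed

lemma young_hj:
  assumes p: "p > 1" and e: "\<epsilon> > 0"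
    and h: "\<epsilon> * m' * Dv \<le> (1 - \<bar>M\<bar> powr (p / (p - 1))) * Fpot p s"
  shows "m' * Dv + M * phi p s * t \<le> ee p \<epsilon> s t"
proof -
  define q where "q = p / (p - 1)"
  have q: "q > 1" "1 / p + 1 / q = 1" using p by (auto simp: q_def field_simps)
  define X where "X = \<epsilon> powr ((p - 1) / p) * \<bar>t\<bar>"
  define Y where "Y = \<bar>M\<bar> * phi p s * \<epsilon> powr (- ((p - 1) / p))"
  have XY: "X * Y = \<bar>M\<bar> * phi p s * \<bar>t\<bar>"
  proof -
    have "\<epsilon> powr ((p - 1) / p) * \<epsilon> powr (- ((p - 1) / p)) = 1"
      using e by (simp add: powr_add[symmetric])
    then show ?thesis unfolding X_def Y_def by (simp add: algebra_simps)
  qed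
  have Xp: "X powr p = \<epsilon> powr (p - 1) * \<bar>t\<bar> powr p"
    using p unfolding X_def by (simp add: powr_mult powr_powr)
  have Yq: "Y powr q = \<bar>M\<bar> powr q * (q * Fpot p s) / \<epsilon>"
  proof -
    have "Y powr q = \<bar>M\<bar> powr q * phi p s powr q * (\<epsilon> powr (- ((p - 1) / p))) powr q"
      unfolding Y_def by (simp add: powr_mult)
    moreover have "phi p s powr q = q * Fpot p s" unfolding q_def by (rule phi_pow[OF p])
    moreover have "(\<epsilon> powr (- ((p - 1) / p))) powr q = \<epsilon> powr (-1)"
    proof -
      have "- ((p - 1) / p) * q = -1" using p by (simp add: q_def field_simps)
      then show ?thesis by (simp add: powr_powr)
    qed
    ultimately show ?thesis using e by (simp add: powr_minus divide_inverse)
  qed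
  have young: "X * Y \<le> X powr p / p + Y powr q / q"
    using Youngs_inequality[OF p q(1) q(2)] by (simp add: X_def Y_def phi_nonneg)
  have "M * phi p s * t \<le> \<bar>M\<bar> * phi p s * \<bar>t\<bar>"
    using phi_nonneg[of p s] by (metis abs_ge_self abs_mult abs_of_nonneg)
  also have "\<dots> \<le> \<epsilon> powr (p - 1) * \<bar>t\<bar> powr p / p + \<bar>M\<bar> powr q * Fpot p s / \<epsilon>"
    using young XY Xp Yq q by simp
  finally have 1: "M * phi p s * t \<le> \<epsilon> powr (p - 1) * \<bar>t\<bar> powr p / p + \<bar>M\<bar> powr q * Fpot p s / \<epsilon>" .
  have 2: "m' * Dv \<le> (1 - \<bar>M\<bar> powr q) * Fpot p s / \<epsilon>"
    using h e unfolding q_def by (simp add: field_simps mult.assoc)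
  have "\<bar>M\<bar> powr q * Fpot p s + (1 - \<bar>M\<bar> powr q) * Fpot p s = Fpot p s"
    by (simp add: left_diff_distrib)
  then have "\<bar>M\<bar> powr q * Fpot p s / \<epsilon> + (1 - \<bar>M\<bar> powr q) * Fpot p s / \<epsilon> = Fpot p s / \<epsilon>"
    by (metis add_divide_distrib)
  then show ?thesis using 1 2 unfolding ee_def by linarith
qed

definition repon :: "real \<Rightarrow> real \<Rightarrow> (real \<Rightarrow> real) \<Rightarrow> (real \<Rightarrow> real) \<Rightarrow> bool" where
  "repon x0 x1 u g \<longleftrightarrow> g absolutely_integrable_on {x0..x1} \<and> continuous_on {x0..x1} u \<and>
     (\<forall>x y. x0 \<le> x \<longrightarrow> x \<le> y \<longrightarrow> y \<le> x1 \<longrightarrow> u y - u x = integral {x..y} g)"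

definition En :: "real \<Rightarrow> real \<Rightarrow> (real \<Rightarrow> real) \<Rightarrow> (real \<Rightarrow> real) \<Rightarrow> real \<Rightarrow> real \<Rightarrow> real" where
  "En p \<epsilon> u g x y = integral {x..y} (\<lambda>t. ee p \<epsilon> (u t) (g t))"

lemma ee_nonneg: "p > 1 \<Longrightarrow> \<epsilon> > 0 \<Longrightarrow> ee p \<epsilon> s t \<ge> 0"
  unfolding ee_def using Fpot_nonneg[of p s] by (intro add_nonneg_nonneg divide_nonneg_pos) auto

lemma repon_sub: "repon x0 x1 u g \<Longrightarrow> x0 \<le> a \<Longrightarrow> b \<le> x1 \<Longrightarrow> repon a b u g"
  unfolding repon_def
  by (auto intro: absolutely_integrable_on_subinterval continuous_on_subset)

lemma En_mono:
  assumes "p > 1" "\<epsilon> > 0" "(\<lambda>t. ee p \<epsilon> (u t) (g t)) integrable_on {x0..x1}"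
    "x0 \<le> a" "a \<le> b" "b \<le> x1"
  shows "En p \<epsilon> u g a b \<le> En p \<epsilon> u g x0 x1"
  unfolding En_def using assms
  by (intro integral_subset_le integrable_subinterval_real[OF assms(3)]) (auto intro: ee_nonneg)

lemma En_nonneg:
  assumes "p > 1" "\<epsilon> > 0"
  shows "En p \<epsilon> u g a b \<ge> 0"
proof (cases "(\<lambda>t. ee p \<epsilon> (u t) (g t)) integrable_on {a..b}")
  case True
  then show ?thesis unfolding En_def using assms by (intro integral_nonneg) (auto intro: ee_nonneg)
next
  case False
  then show ?thesis by (simp add: En_def not_integrable_integral)
qed

lemma En_split:
  assumes "(\<lambda>t. ee p \<epsilon> (u t) (g t)) integrable_on {x0..x1}"
    "x0 \<le> a" "a \<le> b" "b \<le> c" "c \<le> x1"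
  shows "En p \<epsilon> u g a c = En p \<epsilon> u g a b + En p \<epsilon> u g b c"
  unfolding En_def using assms
  by (intro Henstock_Kurzweil_Integration.integral_combine[symmetric] integrable_subinterval_real[OF assms(1)]) auto

lemma calib_Phi:
  assumes p: "p > 1" and e: "\<epsilon> > 0" and rep: "repon x0 x1 u g" and x01: "x0 \<le> x1"
    and fi: "(\<lambda>t. ee p \<epsilon> (u t) (g t)) integrable_on {x0..x1}"
    and dM: "\<And>x. (M has_real_derivative M' x) (at x)" and cM': "continuous_on {x0..x1} M'"
    and hj: "\<And>x. x \<in> {x0..x1} \<Longrightarrow> \<epsilon> * M' x * (Phi p (u x) - Phi p 1) \<le> (1 - \<bar>M x\<bar> powr (p / (p - 1))) * Fpot p (u x)"
  shows "M x1 * (Phi p (u x1) - Phi p 1) - M x0 * (Phi p (u x0) - Phi p 1) \<le> En p \<epsilon> u g x0 x1"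
proof -
  have dD: "((\<lambda>s. Phi p s - Phi p 1) has_real_derivative phi p s) (at s)" for s
    using DERIV_diff[OF Phi_deriv[OF p] DERIV_const] by simp
  show ?thesis unfolding En_def
  proof (rule calib[where D = "\<lambda>s. Phi p s - Phi p 1" and d = "phi p", OF x01 dM dD cM' phi_cont[OF p]])
    show "continuous_on {x0..x1} u" using rep by (simp add: repon_def)
    show "\<And>x y. x0 \<le> x \<Longrightarrow> x \<le> y \<Longrightarrow> y \<le> x1 \<Longrightarrow> u y - u x = integral {x..y} g" using rep by (simp add: repon_def)
    show "g absolutely_integrable_on {x0..x1}" using rep by (simp add: repon_def)
    show "(\<lambda>t. ee p \<epsilon> (u t) (g t)) integrable_on {x0..x1}" by (rule fi)
    fix x assume x: "x \<in> {x0..x1}"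
    show "M' x * (Phi p (u x) - Phi p 1) + M x * phi p (u x) * g x \<le> ee p \<epsilon> (u x) (g x)"
      using young_hj[OF p e hj[OF x]] by (simp add: mult.assoc)
  qed
qed

lemma Phi_diff_le_En:
  assumes p: "p > 1" and e: "\<epsilon> > 0" and rep: "repon x0 x1 u g" and x01: "x0 \<le> x1"
    and fi: "(\<lambda>t. ee p \<epsilon> (u t) (g t)) integrable_on {x0..x1}"
  shows "\<bar>Phi p (u x1) - Phi p (u x0)\<bar> \<le> En p \<epsilon> u g x0 x1"
proof -
  have 1: "1 * (Phi p (u x1) - Phi p 1) - 1 * (Phi p (u x0) - Phi p 1) \<le> En p \<epsilon> u g x0 x1"
    by (rule calib_Phi[OF p e rep x01 fi, where M' = "\<lambda>_. 0"]) (auto intro!: derivative_eq_intros)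
  have 2: "(-1) * (Phi p (u x1) - Phi p 1) - (-1) * (Phi p (u x0) - Phi p 1) \<le> En p \<epsilon> u g x0 x1"
    by (rule calib_Phi[OF p e rep x01 fi, where M' = "\<lambda>_. 0"]) (auto intro!: derivative_eq_intros)
  show ?thesis using 1 2 by (simp add: abs_le_iff)
qed

lemma hj_helper:
  assumes p: "p > 1" and r: "0 < \<rho>" "\<rho> \<le> 1/2" and s: "1 - 2 * \<rho> \<le> s" "s \<le> 1"
    and Bd: "Bd \<ge> 0" "Bd * Rr p \<rho> \<le> 1 - Bv powr (p / (p - 1))"
  shows "Bd * (Phi p 1 - Phi p s) \<le> (1 - Bv powr (p / (p - 1))) * Fpot p s"
proof -
  have "Bd * (Phi p 1 - Phi p s) \<le> Bd * (Rr p \<rho> * Fpot p s)"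
    using Phi_def_bound[OF p r s] Bd by (intro mult_left_mono) auto
  also have "\<dots> = (Bd * Rr p \<rho>) * Fpot p s" by simp
  also have "\<dots> \<le> (1 - Bv powr (p / (p - 1))) * Fpot p s"
    using Bd Fpot_nonneg[of p s] p by (intro mult_right_mono) auto
  finally show ?thesis .
qed

lemma Rr_pos: "p > 1 \<Longrightarrow> \<rho> < 1 \<Longrightarrow> Rr p \<rho> > 0"
  using kphi_pos[of p] by (simp add: Rr_def)

lemma side_R:
  fixes p \<epsilon> \<rho> B1 k L z :: real
  defines "q \<equiv> p / (p - 1)"
  defines "X1 \<equiv> \<epsilon> * B1 * Rr p \<rho> / (1 - B1 powr q)"
  assumes p: "p > 1" and e: "\<epsilon> > 0" and r: "0 < \<rho>" "\<rho> \<le> 1/2" and B1: "0 < B1" "B1 < 1" and k: "k > 0"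
    and krate: "\<And>B. B1 \<le> B \<Longrightarrow> B \<le> 1 \<Longrightarrow> k * Rr p \<rho> * (1 - B) \<le> 1 - B powr q"
    and L: "X1 \<le> L"
    and rep: "repon z (z + L) u g" and fi: "(\<lambda>t. ee p \<epsilon> (u t) (g t)) integrable_on {z..z + L}"
    and uz: "u z \<ge> 1 - \<rho>"
  shows "Phi p 1 - Phi p (u z) - (1 - B1) * exp (- k * (L - X1) / \<epsilon>) * (Phi p 1 - Phi p (1 - 2 * \<rho>))
           \<le> En p \<epsilon> u g z (z + L)"
proof -
  define R where "R = Rr p \<rho>"
  have R: "R > 0" using Rr_pos[OF p] r by (simp add: R_def)
  have qpos: "q > 0" using p by (simp add: q_def)
  have B1q: "B1 powr q < 1"
    using powr_less_mono2[OF qpos, of B1 1] B1 by simp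
  define c where "c = (1 - B1 powr q) / R"
  have c: "c > 0" using B1q R by (simp add: c_def)
  have X1c: "X1 = \<epsilon> * B1 / c" using R B1q by (simp add: X1_def c_def R_def field_simps)
  have X1: "X1 > 0" using X1c e B1 c by simp
  have L0: "L \<ge> 0" using L X1 by simp
  define err where "err = (1 - B1) * exp (- k * (L - X1) / \<epsilon>) * (Phi p 1 - Phi p (1 - 2 * \<rho>))"
  have errnn: "err \<ge> 0" unfolding err_def using B1 Phi_mono[OF p, of "1 - 2 * \<rho>" 1] r by simp
  have En_sub: "En p \<epsilon> u g a b \<le> En p \<epsilon> u g z (z + L)" if "z \<le> a" "a \<le> b" "b \<le> z + L" for a b
    using En_mono[OF p e fi] that by simp
  have PD: "\<bar>Phi p (u b) - Phi p (u a)\<bar> \<le> En p \<epsilon> u g a b" if "z \<le> a" "a \<le> b" "b \<le> z + L" for a b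
    using that by (intro Phi_diff_le_En[OF p e repon_sub[OF rep] _ integrable_subinterval_real[OF fi]]) auto
  consider (i) y where "y \<in> {z..z + L}" "u y \<ge> 1"
    | (ii) y where "y \<in> {z..z + L}" "u y \<le> 1 - 2 * \<rho>"
    | (iii) "\<And>y. y \<in> {z..z + L} \<Longrightarrow> 1 - 2 * \<rho> < u y \<and> u y < 1"
    by (metis not_less)
  then show ?thesis
  proof cases
    case (i)
    have "Phi p 1 \<le> Phi p (u y)" using Phi_mono[OF p i(2)] .
    moreover have "\<bar>Phi p (u y) - Phi p (u z)\<bar> \<le> En p \<epsilon> u g z (z + L)"
      using PD[of z y] En_sub[of z y] i(1) by auto
    ultimately show ?thesis using errnn unfolding err_def by (simp add: abs_le_iff)
  next
    case (ii)
    have "Phi p (u y) \<le> Phi p (1 - 2 * \<rho>)" using Phi_mono[OF p ii(2)] .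
    moreover have "Phi p (1 - \<rho>) \<le> Phi p (u z)" using Phi_mono[OF p uz] .
    moreover have "\<bar>Phi p (u y) - Phi p (u z)\<bar> \<le> En p \<epsilon> u g z (z + L)"
      using PD[of z y] En_sub[of z y] ii(1) by auto
    moreover note Phi_tail_compare[OF p r]
    ultimately show ?thesis using errnn unfolding err_def by (simp add: abs_le_iff)
  next
    case (iii)
    define xs where "xs = z + L - X1"
    have xs: "z \<le> xs" "xs \<le> z + L" using L X1 by (auto simp: xs_def)
    define M1 where "M1 x = c * (z + L - x) / \<epsilon>" for x
    define M2 where "M2 x = 1 - (1 - B1) * exp (- k * ((z + L - x) - X1) / \<epsilon>)" for x
    define M2' where "M2' x = - ((1 - B1) * exp (- k * ((z + L - x) - X1) / \<epsilon>) * (k / \<epsilon>))" for x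
    have ph1: "M1 (z + L) * (Phi p (u (z + L)) - Phi p 1) - M1 xs * (Phi p (u xs) - Phi p 1) \<le> En p \<epsilon> u g xs (z + L)"
    proof (rule calib_Phi[OF p e repon_sub[OF rep] _ integrable_subinterval_real[OF fi], where M' = "\<lambda>_. - c / \<epsilon>"])
      show "\<And>x. (M1 has_real_derivative - c / \<epsilon>) (at x)"
        using e unfolding M1_def by (auto intro!: derivative_eq_intros simp: field_simps)
      fix x assume x: "x \<in> {xs..z + L}"
      have ux: "1 - 2 * \<rho> \<le> u x" "u x \<le> 1" using iii[of x] x xs by auto
      have d: "0 \<le> z + L - x" "z + L - x \<le> X1" using x by (auto simp: xs_def)
      have "M1 x \<le> c * X1 / \<epsilon>" unfolding M1_def using d c e by (intro divide_right_mono mult_left_mono) auto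
      moreover have "c * X1 / \<epsilon> = B1" using X1c c e by simp
      moreover have "0 \<le> M1 x" unfolding M1_def using d c e by simp
      ultimately have M1x: "0 \<le> M1 x" "M1 x \<le> B1" by auto
      have "\<bar>M1 x\<bar> powr q \<le> B1 powr q" using M1x qpos by (intro powr_mono2) auto
      then have h: "c * Rr p \<rho> \<le> 1 - \<bar>M1 x\<bar> powr q" using R by (simp add: c_def R_def)
      have "c * (Phi p 1 - Phi p (u x)) \<le> (1 - \<bar>M1 x\<bar> powr q) * Fpot p (u x)"
        using hj_helper[OF p r ux _ h[unfolded q_def]] c unfolding q_def by simp
      then show "\<epsilon> * (- c / \<epsilon>) * (Phi p (u x) - Phi p 1) \<le> (1 - \<bar>M1 x\<bar> powr (p / (p - 1))) * Fpot p (u x)"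
        using e by (simp add: q_def algebra_simps)
    qed (use xs in auto)
    have ph2: "M2 xs * (Phi p (u xs) - Phi p 1) - M2 z * (Phi p (u z) - Phi p 1) \<le> En p \<epsilon> u g z xs"
    proof (rule calib_Phi[OF p e repon_sub[OF rep] _ integrable_subinterval_real[OF fi], where M' = M2'])
      show "\<And>x. (M2 has_real_derivative M2' x) (at x)"
        using e unfolding M2_def M2'_def by (auto intro!: derivative_eq_intros simp: field_simps)
      show "continuous_on {z..xs} M2'" unfolding M2'_def using e by (intro continuous_intros) auto
      fix x assume x: "x \<in> {z..xs}"
      have ux: "1 - 2 * \<rho> \<le> u x" "u x \<le> 1" using iii[of x] x xs by auto
      define E where "E = exp (- k * ((z + L - x) - X1) / \<epsilon>)"
      have d: "0 \<le> (z + L - x) - X1" using x by (auto simp: xs_def)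
      have "k * ((z + L - x) - X1) \<ge> 0" using d k by simp
      then have "- k * ((z + L - x) - X1) / \<epsilon> \<le> 0" using e by (simp add: divide_nonpos_pos)
      then have E: "0 < E" "E \<le> 1" unfolding E_def by auto
      have M2x: "M2 x = 1 - (1 - B1) * E" by (simp add: M2_def E_def)
      have "(1 - B1) * E \<le> 1 - B1" using E B1 by (intro mult_left_le) auto
      moreover have "(1 - B1) * E \<ge> 0" using E B1 by simp
      ultimately have M2r: "B1 \<le> M2 x" "M2 x \<le> 1" using M2x by linarith+
      have h: "(k * (1 - M2 x)) * Rr p \<rho> \<le> 1 - \<bar>M2 x\<bar> powr q"
        using krate[OF M2r] M2r B1 by (simp add: algebra_simps)
      have hh: "(k * (1 - M2 x)) * (Phi p 1 - Phi p (u x)) \<le> (1 - \<bar>M2 x\<bar> powr q) * Fpot p (u x)"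
        using hj_helper[OF p r ux _ h[unfolded q_def]] k M2r unfolding q_def by simp
      have "\<epsilon> * M2' x * (Phi p (u x) - Phi p 1) = (k * (1 - M2 x)) * (Phi p 1 - Phi p (u x))"
        using e unfolding M2'_def M2x E_def by (simp add: field_simps)
      then show "\<epsilon> * M2' x * (Phi p (u x) - Phi p 1) \<le> (1 - \<bar>M2 x\<bar> powr (p / (p - 1))) * Fpot p (u x)"
        using hh by (simp add: q_def)
    qed (use xs in auto)
    have M1e: "M1 (z + L) = 0" "M1 xs = B1" using c e X1c by (auto simp: M1_def xs_def)
    have M2e: "M2 xs = B1" by (simp add: M2_def xs_def)
    have M2z: "M2 z = 1 - (1 - B1) * exp (- k * (L - X1) / \<epsilon>)" by (simp add: M2_def)
    have split: "En p \<epsilon> u g z (z + L) = En p \<epsilon> u g z xs + En p \<epsilon> u g xs (z + L)"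
      using En_split[OF fi, of z xs "z + L"] xs by simp
    have main: "- M2 z * (Phi p (u z) - Phi p 1) \<le> En p \<epsilon> u g z (z + L)"
      using ph1 ph2 split M1e M2e by simp
    have uz2: "Phi p 1 - Phi p (u z) \<le> Phi p 1 - Phi p (1 - 2 * \<rho>)"
      using Phi_mono[OF p, of "1 - 2 * \<rho>" "u z"] iii[of z] L0 by auto
    have "Phi p 1 - Phi p (u z) - err \<le> - M2 z * (Phi p (u z) - Phi p 1)"
    proof -
      have "(1 - B1) * exp (- k * (L - X1) / \<epsilon>) * (Phi p 1 - Phi p (u z)) \<le> err"
        unfolding err_def using uz2 B1 by (intro mult_left_mono) auto
      then show ?thesis unfolding M2z by (simp add: algebra_simps)
    qed
    then show ?thesis using main unfolding err_def by simp
  qed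
qed

lemma side_L:
  fixes p \<epsilon> \<rho> B1 k L z :: real
  defines "q \<equiv> p / (p - 1)"
  defines "X1 \<equiv> \<epsilon> * B1 * Rr p \<rho> / (1 - B1 powr q)"
  assumes p: "p > 1" and e: "\<epsilon> > 0" and r: "0 < \<rho>" "\<rho> \<le> 1/2" and B1: "0 < B1" "B1 < 1" and k: "k > 0"
    and krate: "\<And>B. B1 \<le> B \<Longrightarrow> B \<le> 1 \<Longrightarrow> k * Rr p \<rho> * (1 - B) \<le> 1 - B powr q"
    and L: "X1 \<le> L"
    and rep: "repon (z - L) z u g" and fi: "(\<lambda>t. ee p \<epsilon> (u t) (g t)) integrable_on {z - L..z}"
    and uz: "u z \<ge> 1 - \<rho>"
  shows "Phi p 1 - Phi p (u z) - (1 - B1) * exp (- k * (L - X1) / \<epsilon>) * (Phi p 1 - Phi p (1 - 2 * \<rho>))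
           \<le> En p \<epsilon> u g (z - L) z"
proof -
  define R where "R = Rr p \<rho>"
  have R: "R > 0" using Rr_pos[OF p] r by (simp add: R_def)
  have qpos: "q > 0" using p by (simp add: q_def)
  have B1q: "B1 powr q < 1"
    using powr_less_mono2[OF qpos, of B1 1] B1 by simp
  define c where "c = (1 - B1 powr q) / R"
  have c: "c > 0" using B1q R by (simp add: c_def)
  have X1c: "X1 = \<epsilon> * B1 / c" using R B1q by (simp add: X1_def c_def R_def field_simps)
  have X1: "X1 > 0" using X1c e B1 c by simp
  have L0: "L \<ge> 0" using L X1 by simp
  define err where "err = (1 - B1) * exp (- k * (L - X1) / \<epsilon>) * (Phi p 1 - Phi p (1 - 2 * \<rho>))"
  have errnn: "err \<ge> 0" unfolding err_def using B1 Phi_mono[OF p, of "1 - 2 * \<rho>" 1] r by simp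
  have En_sub: "En p \<epsilon> u g a b \<le> En p \<epsilon> u g (z - L) z" if "z - L \<le> a" "a \<le> b" "b \<le> z" for a b
    using En_mono[OF p e fi] that by simp
  have PD: "\<bar>Phi p (u b) - Phi p (u a)\<bar> \<le> En p \<epsilon> u g a b" if "z - L \<le> a" "a \<le> b" "b \<le> z" for a b
    using that by (intro Phi_diff_le_En[OF p e repon_sub[OF rep] _ integrable_subinterval_real[OF fi]]) auto
  consider (i) y where "y \<in> {z - L..z}" "u y \<ge> 1"
    | (ii) y where "y \<in> {z - L..z}" "u y \<le> 1 - 2 * \<rho>"
    | (iii) "\<And>y. y \<in> {z - L..z} \<Longrightarrow> 1 - 2 * \<rho> < u y \<and> u y < 1"
    by (metis not_less)
  then show ?thesis
  proof cases
    case (i)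
    have "Phi p 1 \<le> Phi p (u y)" using Phi_mono[OF p i(2)] .
    moreover have "\<bar>Phi p (u z) - Phi p (u y)\<bar> \<le> En p \<epsilon> u g (z - L) z"
      using PD[of y z] En_sub[of y z] i(1) by auto
    ultimately show ?thesis using errnn unfolding err_def by (simp add: abs_le_iff)
  next
    case (ii)
    have "Phi p (u y) \<le> Phi p (1 - 2 * \<rho>)" using Phi_mono[OF p ii(2)] .
    moreover have "Phi p (1 - \<rho>) \<le> Phi p (u z)" using Phi_mono[OF p uz] .
    moreover have "\<bar>Phi p (u z) - Phi p (u y)\<bar> \<le> En p \<epsilon> u g (z - L) z"
      using PD[of y z] En_sub[of y z] ii(1) by auto
    moreover note Phi_tail_compare[OF p r]
    ultimately show ?thesis using errnn unfolding err_def by (simp add: abs_le_iff)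
  next
    case (iii)
    define xs where "xs = z - L + X1"
    have xs: "z - L \<le> xs" "xs \<le> z" using L X1 by (auto simp: xs_def)
    define M1 where "M1 x = - (c * (x - (z - L)) / \<epsilon>)" for x
    define M2 where "M2 x = - (1 - (1 - B1) * exp (- k * ((x - (z - L)) - X1) / \<epsilon>))" for x
    define M2' where "M2' x = - ((1 - B1) * exp (- k * ((x - (z - L)) - X1) / \<epsilon>) * (k / \<epsilon>))" for x
    have ph1: "M1 xs * (Phi p (u xs) - Phi p 1) - M1 (z - L) * (Phi p (u (z - L)) - Phi p 1) \<le> En p \<epsilon> u g (z - L) xs"
    proof (rule calib_Phi[OF p e repon_sub[OF rep] _ integrable_subinterval_real[OF fi], where M' = "\<lambda>_. - c / \<epsilon>"])
      show "\<And>x. (M1 has_real_derivative - c / \<epsilon>) (at x)"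
        using e unfolding M1_def by (auto intro!: derivative_eq_intros simp: field_simps)
      fix x assume x: "x \<in> {z - L..xs}"
      have ux: "1 - 2 * \<rho> \<le> u x" "u x \<le> 1" using iii[of x] x xs by auto
      have d: "0 \<le> x - (z - L)" "x - (z - L) \<le> X1" using x by (auto simp: xs_def)
      have "c * (x - (z - L)) / \<epsilon> \<le> c * X1 / \<epsilon>" using d c e by (intro divide_right_mono mult_left_mono) auto
      moreover have "c * X1 / \<epsilon> = B1" using X1c c e by simp
      moreover have "0 \<le> c * (x - (z - L)) / \<epsilon>" using d c e by simp
      ultimately have M1x: "\<bar>M1 x\<bar> \<le> B1" unfolding M1_def by auto
      have "\<bar>M1 x\<bar> powr q \<le> B1 powr q" using M1x qpos by (intro powr_mono2) auto
      then have h: "c * Rr p \<rho> \<le> 1 - \<bar>M1 x\<bar> powr q" using R by (simp add: c_def R_def)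
      have "c * (Phi p 1 - Phi p (u x)) \<le> (1 - \<bar>M1 x\<bar> powr q) * Fpot p (u x)"
        using hj_helper[OF p r ux _ h[unfolded q_def]] c unfolding q_def by simp
      then show "\<epsilon> * (- c / \<epsilon>) * (Phi p (u x) - Phi p 1) \<le> (1 - \<bar>M1 x\<bar> powr (p / (p - 1))) * Fpot p (u x)"
        using e by (simp add: q_def algebra_simps)
    qed (use xs in auto)
    have ph2: "M2 z * (Phi p (u z) - Phi p 1) - M2 xs * (Phi p (u xs) - Phi p 1) \<le> En p \<epsilon> u g xs z"
    proof (rule calib_Phi[OF p e repon_sub[OF rep] _ integrable_subinterval_real[OF fi], where M' = M2'])
      show "\<And>x. (M2 has_real_derivative M2' x) (at x)"
        using e unfolding M2_def M2'_def by (auto intro!: derivative_eq_intros simp: field_simps)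
      show "continuous_on {xs..z} M2'" unfolding M2'_def using e by (intro continuous_intros) auto
      fix x assume x: "x \<in> {xs..z}"
      have ux: "1 - 2 * \<rho> \<le> u x" "u x \<le> 1" using iii[of x] x xs by auto
      define E where "E = exp (- k * ((x - (z - L)) - X1) / \<epsilon>)"
      have d: "0 \<le> (x - (z - L)) - X1" using x by (auto simp: xs_def)
      have "k * ((x - (z - L)) - X1) \<ge> 0" using d k by simp
      then have "- k * ((x - (z - L)) - X1) / \<epsilon> \<le> 0" using e by (simp add: divide_nonpos_pos)
      then have E: "0 < E" "E \<le> 1" unfolding E_def by auto
      define Bv where "Bv = 1 - (1 - B1) * E"
      have M2x: "M2 x = - Bv" by (simp add: M2_def E_def Bv_def)
      have "(1 - B1) * E \<le> 1 - B1" using E B1 by (intro mult_left_le) auto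
      moreover have "(1 - B1) * E \<ge> 0" using E B1 by simp
      ultimately have Bvr: "B1 \<le> Bv" "Bv \<le> 1" unfolding Bv_def by linarith+
      have absM: "\<bar>M2 x\<bar> = Bv" using Bvr B1 M2x by simp
      have h: "(k * (1 - Bv)) * Rr p \<rho> \<le> 1 - Bv powr q"
        using krate[OF Bvr] by (simp add: algebra_simps)
      have hh: "(k * (1 - Bv)) * (Phi p 1 - Phi p (u x)) \<le> (1 - Bv powr q) * Fpot p (u x)"
        using hj_helper[OF p r ux _ h[unfolded q_def]] k Bvr unfolding q_def by simp
      have "\<epsilon> * M2' x * (Phi p (u x) - Phi p 1) = (k * (1 - Bv)) * (Phi p 1 - Phi p (u x))"
        using e unfolding M2'_def Bv_def E_def by (simp add: field_simps)
      then show "\<epsilon> * M2' x * (Phi p (u x) - Phi p 1) \<le> (1 - \<bar>M2 x\<bar> powr (p / (p - 1))) * Fpot p (u x)"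
        using hh absM by (simp add: q_def)
    qed (use xs in auto)
    have M1e: "M1 (z - L) = 0" "M1 xs = - B1" using c e X1c by (auto simp: M1_def xs_def)
    have M2e: "M2 xs = - B1" by (simp add: M2_def xs_def)
    have M2z: "M2 z = - (1 - (1 - B1) * exp (- k * (L - X1) / \<epsilon>))" by (simp add: M2_def)
    have split: "En p \<epsilon> u g (z - L) z = En p \<epsilon> u g (z - L) xs + En p \<epsilon> u g xs z"
      using En_split[OF fi, of "z - L" xs z] xs by simp
    have main: "M2 z * (Phi p (u z) - Phi p 1) \<le> En p \<epsilon> u g (z - L) z"
      using ph1 ph2 split M1e M2e by simp
    have uz2: "Phi p 1 - Phi p (u z) \<le> Phi p 1 - Phi p (1 - 2 * \<rho>)"
      using Phi_mono[OF p, of "1 - 2 * \<rho>" "u z"] iii[of z] L0 by auto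
    have "Phi p 1 - Phi p (u z) - err \<le> M2 z * (Phi p (u z) - Phi p 1)"
    proof -
      have "(1 - B1) * exp (- k * (L - X1) / \<epsilon>) * (Phi p 1 - Phi p (u z)) \<le> err"
        unfolding err_def using uz2 B1 by (intro mult_left_mono) auto
      then show ?thesis unfolding M2z by (simp add: algebra_simps)
    qed
    then show ?thesis using main unfolding err_def by simp
  qed
qed

lemma repon_neg: assumes "repon x0 x1 u g" shows "repon x0 x1 (\<lambda>x. - u x) (\<lambda>x. - g x)"
proof -
  from assms have a: "g integrable_on {x0..x1}" "(\<lambda>x. \<bar>g x\<bar>) integrable_on {x0..x1}" "continuous_on {x0..x1} u"
    "\<And>x y. x0 \<le> x \<Longrightarrow> x \<le> y \<Longrightarrow> y \<le> x1 \<Longrightarrow> integral {x..y} g = u y - u x"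
    unfolding repon_def absolutely_integrable_on_def by auto
  show ?thesis unfolding repon_def absolutely_integrable_on_def
    using a by (auto intro!: integrable_neg continuous_intros)
qed

lemma ee_neg: "ee p \<epsilon> (- s) (- t) = ee p \<epsilon> s t"
  by (simp add: ee_def Fpot_even)

lemma En_neg: "En p \<epsilon> (\<lambda>x. - u x) (\<lambda>x. - g x) = En p \<epsilon> u g"
  by (simp add: En_def[abs_def] ee_neg)

lemma transition:
  fixes p \<epsilon> \<rho> B1 k r \<tau> h z0 z1 :: real
  defines "q \<equiv> p / (p - 1)"
  defines "X1 \<equiv> \<epsilon> * B1 * Rr p \<rho> / (1 - B1 powr q)"
  assumes p: "p > 1" and e: "\<epsilon> > 0" and r: "0 < \<rho>" "\<rho> \<le> 1/2" and B1: "0 < B1" "B1 < 1" and k: "k > 0"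
    and krate: "\<And>B. B1 \<le> B \<Longrightarrow> B \<le> 1 \<Longrightarrow> k * Rr p \<rho> * (1 - B) \<le> 1 - B powr q"
    and L: "X1 \<le> Lm"
    and rep: "repon (h - r) (h + r) w gw" and fi: "(\<lambda>t. ee p \<epsilon> (w t) (gw t)) integrable_on {h - r..h + r}"
    and z: "h - r \<le> z0" "z0 \<le> z1" "z1 \<le> h + r" "Lm \<le> z0 - (h - r)" "Lm \<le> (h + r) - z1"
    and wz: "w z0 \<le> - (1 - \<rho>)" "w z1 \<ge> 1 - \<rho>"
  shows "c_const p - 2 * ((1 - B1) * exp (- k * (Lm - X1) / \<epsilon>) * (Phi p 1 - Phi p (1 - 2 * \<rho>)))
           \<le> En p \<epsilon> w gw (h - r) (h + r)"
proof -
  define K where "K = Phi p 1 - Phi p (1 - 2 * \<rho>)"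
  have K: "K \<ge> 0" unfolding K_def using Phi_mono[OF p, of "1 - 2 * \<rho>" 1] r by simp
  define errf where "errf LL = (1 - B1) * exp (- k * (LL - X1) / \<epsilon>) * K" for LL
  have errmono: "errf LL \<le> errf Lm" if "Lm \<le> LL" for LL
  proof -
    have "- k * (LL - X1) / \<epsilon> \<le> - k * (Lm - X1) / \<epsilon>"
      using that k e by (intro divide_right_mono) (auto simp: algebra_simps)
    then have "exp (- k * (LL - X1) / \<epsilon>) \<le> exp (- k * (Lm - X1) / \<epsilon>)" by simp
    then show ?thesis unfolding errf_def using B1 K by (intro mult_right_mono mult_left_mono) auto
  qed
  define LL where "LL = z0 - (h - r)"
  define LR where "LR = (h + r) - z1"
  have left: "Phi p 1 - Phi p (- w z0) - errf LL \<le> En p \<epsilon> (\<lambda>x. - w x) (\<lambda>x. - gw x) (z0 - LL) z0"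
    unfolding errf_def K_def
  proof (rule side_L[OF p e r B1 k, folded q_def, OF krate, folded X1_def])
    show "X1 \<le> LL" using L z by (simp add: LL_def)
    show "repon (z0 - LL) z0 (\<lambda>x. - w x) (\<lambda>x. - gw x)"
      using repon_neg[OF repon_sub[OF rep, of "h - r" z0]] z by (simp add: LL_def)
    show "(\<lambda>t. ee p \<epsilon> (- w t) (- gw t)) integrable_on {z0 - LL..z0}"
      using integrable_subinterval_real[OF fi, of "h - r" z0] z by (simp add: LL_def ee_neg)
    show "1 - \<rho> \<le> - w z0" using wz by simp
  qed auto
  have right: "Phi p 1 - Phi p (w z1) - errf LR \<le> En p \<epsilon> w gw z1 (z1 + LR)"
    unfolding errf_def K_def
  proof (rule side_R[OF p e r B1 k, folded q_def, OF krate, folded X1_def])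
    show "X1 \<le> LR" using L z by (simp add: LR_def)
    show "repon z1 (z1 + LR) w gw"
      using repon_sub[OF rep, of z1 "h + r"] z by (simp add: LR_def)
    show "(\<lambda>t. ee p \<epsilon> (w t) (gw t)) integrable_on {z1..z1 + LR}"
      using integrable_subinterval_real[OF fi, of z1 "h + r"] z by (simp add: LR_def)
    show "1 - \<rho> \<le> w z1" using wz by simp
  qed auto
  have mid: "\<bar>Phi p (w z1) - Phi p (w z0)\<bar> \<le> En p \<epsilon> w gw z0 z1"
    using z by (intro Phi_diff_le_En[OF p e repon_sub[OF rep] _ integrable_subinterval_real[OF fi]]) auto
  have e1: "En p \<epsilon> (\<lambda>x. - w x) (\<lambda>x. - gw x) (z0 - LL) z0 = En p \<epsilon> w gw (h - r) z0"
    by (simp add: En_neg LL_def)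
  have e2: "En p \<epsilon> w gw z1 (z1 + LR) = En p \<epsilon> w gw z1 (h + r)" by (simp add: LR_def)
  have sp: "En p \<epsilon> w gw (h - r) (h + r) = En p \<epsilon> w gw (h - r) z0 + En p \<epsilon> w gw z0 z1 + En p \<epsilon> w gw z1 (h + r)"
    using En_split[OF fi, of "h - r" z0 "h + r"] En_split[OF fi, of z0 z1 "h + r"] z by simp
  have odd: "Phi p (- w z0) = - Phi p (w z0)" "Phi p (-1) = - Phi p 1" using Phi_odd[OF p] by auto
  have "errf LL \<le> errf Lm" "errf LR \<le> errf Lm" using errmono z by (auto simp: LL_def LR_def)
  then show ?thesis
    using left right mid e1 e2 sp odd c_const_Phi[OF p] unfolding errf_def K_def
    by (simp add: abs_le_iff)
qed

lemma find_point:
  fixes G :: "real \<Rightarrow> real"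
  assumes l: "ll > 0" and r: "\<rho> > 0" and cG: "continuous_on {c..c + ll} G"
    and dec: "\<And>x y. c \<le> x \<Longrightarrow> x \<le> y \<Longrightarrow> y \<le> c + ll \<Longrightarrow> G y - G x \<le> - \<rho> * (y - x)"
  shows "\<rho> * ll * ll / 18 \<le> integral {c..c + ll} (\<lambda>x. \<bar>G x\<bar>)"
proof -
  have cA: "continuous_on {c..c + ll} (\<lambda>x. \<bar>G x\<bar>)" using cG by (intro continuous_intros)
  have lowI: "\<rho> * ll * ll / 18 \<le> integral {c..c + ll} (\<lambda>x. \<bar>G x\<bar>)"
    if I: "c \<le> a" "b = a + ll / 3" "b \<le> c + ll" and bd: "\<And>x. x \<in> {a..b} \<Longrightarrow> \<rho> * ll / 6 \<le> \<bar>G x\<bar>" for a b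
  proof -
    have "integral {a..b} (\<lambda>x. \<rho> * ll / 6) \<le> integral {a..b} (\<lambda>x. \<bar>G x\<bar>)"
      using bd I l by (intro integral_le integrable_continuous_real continuous_on_subset[OF cA]) auto
    moreover have "integral {a..b} (\<lambda>x. \<rho> * ll / 6) = \<rho> * ll * ll / 18"
      using I l by simp
    moreover have "integral {a..b} (\<lambda>x. \<bar>G x\<bar>) \<le> integral {c..c + ll} (\<lambda>x. \<bar>G x\<bar>)"
      using I l by (intro integral_subset_le integrable_continuous_real continuous_on_subset[OF cA]) auto
    ultimately show ?thesis by linarith
  qed
  show ?thesis
  proof (cases "\<forall>x\<in>{c..c + ll/3}. \<rho> * ll / 6 \<le> G x")
    case True
    show ?thesis
    proof (rule lowI[of c "c + ll/3"])
      fix x assume "x \<in> {c..c + ll/3}"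
      then have "\<rho> * ll / 6 \<le> G x" using True by auto
      then show "\<rho> * ll / 6 \<le> \<bar>G x\<bar>" by linarith
    qed (use l in auto)
  next
    case False
    then obtain x0 where x0: "x0 \<in> {c..c + ll/3}" "G x0 < \<rho> * ll / 6" by auto
    show ?thesis
    proof (rule lowI[of "c + 2 * ll / 3" "c + ll"])
      fix y assume y: "y \<in> {c + 2 * ll / 3..c + ll}"
      have "G y - G x0 \<le> - \<rho> * (y - x0)" using dec[of x0 y] x0 y l by auto
      moreover have "\<rho> * (ll / 3) \<le> \<rho> * (y - x0)" using x0 y r by (intro mult_left_mono) auto
      ultimately have "G y \<le> - (\<rho> * ll / 6)" using x0 by simp
      then show "\<rho> * ll / 6 \<le> \<bar>G y\<bar>" by simp
    qed (use l in auto)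
  qed
qed

lemma psi_lower:
  fixes q B :: real
  assumes q: "q > 0" and B: "0 < B" "B < 1"
  shows "q / (1 + q * (1 - B)) \<le> (1 - B powr q) / (1 - B)"
proof -
  define x where "x = - q * ln B"
  define x0 where "x0 = q * (1 - B)"
  have lnB: "ln B \<le> B - 1" using ln_le_minus_one B by simp
  have "1 - B \<le> - ln B" using lnB by simp
  then have "q * (1 - B) \<le> q * (- ln B)" by (rule mult_left_mono) (use q in auto)
  then have x0x: "x0 \<le> x" unfolding x_def x0_def by simp
  have x0: "x0 > 0" using q B by (simp add: x0_def)
  have Bq: "B powr q = exp (- x)" using B by (simp add: powr_def x_def)
  have "1 + x \<le> exp x" by simp
  then have "exp (- x) * (1 + x) \<le> 1" by (simp add: exp_minus field_simps)
  then have "1 - B powr q \<ge> x / (1 + x)" using x0 x0x unfolding Bq by (simp add: field_simps)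
  moreover have "x0 / (1 + x0) \<le> x / (1 + x)" using x0 x0x by (simp add: field_simps)
  ultimately have "x0 / (1 + x0) \<le> 1 - B powr q" by linarith
  then have "x0 / (1 + x0) / (1 - B) \<le> (1 - B powr q) / (1 - B)" by (rule divide_right_mono) (use B in simp)
  moreover have "x0 / (1 + x0) / (1 - B) = q / (1 + q * (1 - B))"
  proof -
    have "x0 / (1 + x0) / (1 - B) = (x0 / (1 - B)) / (1 + x0)" by simp
    moreover have "x0 / (1 - B) = q" using B by (simp add: x0_def)
    ultimately show ?thesis by (simp add: x0_def)
  qed
  ultimately show ?thesis by simp
qed

lemma bern_powr:
  fixes p \<rho> :: real
  assumes p: "p > 0" and r: "0 \<le> \<rho>" "\<rho> \<le> 1/2"
  shows "1 - 2 * p * \<rho> \<le> (1 - \<rho>) powr p"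
proof -
  have pos: "1 - \<rho> > 0" using r by simp
  have "ln (1 / (1 - \<rho>)) \<le> 1 / (1 - \<rho>) - 1" using ln_le_minus_one pos by simp
  then have "- ln (1 - \<rho>) \<le> \<rho> / (1 - \<rho>)" using pos by (simp add: ln_div field_simps)
  moreover have "\<rho> / (1 - \<rho>) \<le> 2 * \<rho>"
  proof -
    have "\<rho> * (2 * \<rho>) \<le> \<rho> * 1" using r by (intro mult_left_mono) auto
    then have "\<rho> \<le> 2 * \<rho> * (1 - \<rho>)" by (simp add: algebra_simps)
    then show ?thesis using pos by (simp add: pos_divide_le_eq)
  qed
  ultimately have l: "ln (1 - \<rho>) \<ge> - 2 * \<rho>" by simp
  have e1: "1 + p * ln (1 - \<rho>) \<le> exp (p * ln (1 - \<rho>))" by (rule exp_ge_add_one_self)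
  have e2: "p * (- 2 * \<rho>) \<le> p * ln (1 - \<rho>)" using l p by (intro mult_left_mono) auto
  have e3: "(1 - \<rho>) powr p = exp (p * ln (1 - \<rho>))" using pos by (simp add: powr_def)
  have e4: "p * (- 2 * \<rho>) = - (2 * p * \<rho>)" by simp
  show ?thesis using e1 e2 e3 e4 by linarith
qed

lemma krate_convex:
  fixes q B1 B :: real
  assumes q: "q \<ge> 1" and B1: "0 < B1" "B1 < 1" and B: "B1 \<le> B" "B \<le> 1"
  shows "(1 - B1 powr q) / (1 - B1) * (1 - B) \<le> 1 - B powr q"
proof -
  define t where "t = (B - B1) / (1 - B1)"
  have t: "0 \<le> t" "t \<le> 1" using B B1 by (auto simp: t_def field_simps)
  have "t * (1 - B1) = B - B1" using B1 by (simp add: t_def)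
  then have "(1 - t) * B1 + t = B" by (simp add: algebra_simps)
  then have Bt: "B = (1 - t) *\<^sub>R B1 + t *\<^sub>R 1" by simp
  have "B powr q \<le> (1 - t) * B1 powr q + t * 1 powr q"
    unfolding Bt by (rule convex_onD[OF powr_convex[OF q] t]) (use B1 in auto)
  then have "B powr q \<le> (1 - t) * B1 powr q + t" by simp
  moreover have "(1 - B1 powr q) / (1 - B1) * (1 - B) = (1 - t) * (1 - B1 powr q)"
    using B1 by (simp add: t_def field_simps)
  ultimately show ?thesis by (simp add: algebra_simps)
qed

lemma kphi_lambda:
  assumes p: "p > 1"
  shows "kphi p * (p * lambda_const p) = p / (p - 1)"
proof -
  have p0: "p > 0" "p - 1 > 0" using p by auto
  have k: "ln (kphi p) = (p - 1) / p * (ln p - ln (p - 1)) - (p - 1) / p * (ln 2 + ln p)"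
    using p0 by (simp add: kphi_def ln_div ln_mult ln_powr)
  have l: "ln (lambda_const p) = (1 - 1 / p) * ln 2 + (- 1 / p) * ln (p - 1)"
    using p0 by (simp add: lambda_const_def ln_mult ln_powr)
  have kpos: "kphi p > 0" using kphi_pos[OF p] .
  have lpos: "lambda_const p > 0" using p0 by (simp add: lambda_const_def)
  have "ln (kphi p * (p * lambda_const p)) = ln (kphi p) + ln p + ln (lambda_const p)"
    using kpos lpos p0 by (simp add: ln_mult)
  also have "\<dots> = ln p - ln (p - 1)"
    unfolding k l using p0 by (simp add: field_simps)
  also have "\<dots> = ln (p / (p - 1))" using p0 by (simp add: ln_div)
  finally show ?thesis using kpos lpos p0 by (simp add: ln_inj_iff)
qed

lemma H1_facts:
  assumes H: "H1_with_deriv a b u g" and ab: "a \<le> b"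
  shows "repon a b u g" "\<And>x. x \<in> {a..b} \<Longrightarrow> u x = u a + integral {a..x} g"
proof -
  have gm: "g \<in> borel_measurable borel" and sg: "set_integrable lborel {a..b} g"
    and ux: "\<And>x. x \<in> {a..b} \<Longrightarrow> u x = u a + (LINT y:{a..x}|lborel. g y)"
    using H unfolding H1_with_deriv_def by blast+
  have sgx: "set_integrable lborel {a..x} g" if "x \<in> {a..b}" for x
    using that by (intro set_integrable_subset[OF sg]) auto
  show ux': "u x = u a + integral {a..x} g" if "x \<in> {a..b}" for x
    using ux[OF that] set_borel_integral_eq_integral(2)[OF sgx[OF that]] by simp
  have gI: "g integrable_on {a..b}" using set_borel_integral_eq_integral(1)[OF sg] .
  have agI: "(\<lambda>x. \<bar>g x\<bar>) integrable_on {a..b}"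
    using set_borel_integral_eq_integral(1)[OF set_integrable_abs[OF sg]] .
  have ai: "g absolutely_integrable_on {a..b}"
    unfolding absolutely_integrable_on_def using gI agI by simp
  have cu: "continuous_on {a..b} u"
  proof -
    have "continuous_on {a..b} (\<lambda>x. u a + integral {a..x} g)"
      by (intro continuous_intros indefinite_integral_continuous_1 gI)
    then show ?thesis by (rule continuous_on_eq) (rule ux'[symmetric])
  qed
  have rep: "u y - u x = integral {x..y} g" if "a \<le> x" "x \<le> y" "y \<le> b" for x y
  proof -
    have "integral {a..x} g + integral {x..y} g = integral {a..y} g"
      using that integrable_subinterval_real[OF gI, of a y]
      by (intro Henstock_Kurzweil_Integration.integral_combine) auto
    moreover have "u x = u a + integral {a..x} g" by (rule ux') (use that in auto)
    moreover have "u y = u a + integral {a..y} g" by (rule ux') (use that in auto)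
    ultimately show ?thesis by linarith
  qed
  show "repon a b u g" unfolding repon_def using ai cu rep by auto
qed

lemma prim_cont_eq:
  assumes "continuous_on {a..b} w" "x \<in> {a..b}"
  shows "prim a w x = integral {a..x} w"
proof -
  have "set_integrable lborel {a..x} w"
    using assms by (intro borel_integrable_atLeastAtMost' continuous_on_subset[OF assms(1)]) auto
  then show ?thesis unfolding prim_def by (rule set_borel_integral_eq_integral(2))
qed

lemma prod_sign: "finite I \<Longrightarrow> (\<Prod>i\<in>I. if P i then - 1 else (1::real)) = (- 1) ^ card {i\<in>I. P i}"
proof (induction I rule: finite_induct)
  case empty
  then show ?case by simp
next
  case (insert x F)
  have fin: "finite {i \<in> F. P i}" using insert by simp
  show ?case
  proof (cases "P x")
    case True
    then have "{i \<in> insert x F. P i} = insert x {i \<in> F. P i}" by auto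
    then show ?thesis using insert True fin by simp
  next
    case False
    then have "{i \<in> insert x F. P i} = {i \<in> F. P i}" by auto
    then show ?thesis using insert False by simp
  qed
qed

lemma v_set_integrable:
  fixes v :: "real \<Rightarrow> real" and h :: "nat \<Rightarrow> real" and s0 :: real
  assumes vab: "\<And>x. x \<in> {a..b} \<Longrightarrow> v x \<in> {-1, 1}"
    and vs: "\<forall>x\<in>{a..b} - h ` {1..N}. v x = s0 * (-1) ^ card {i\<in>{1..N}. h i < x}"
  shows "set_integrable lborel {a..b} v"
proof -
  define vs where "vs x = s0 * (\<Prod>i\<in>{1..N}. if h i < x then - 1 else (1::real))" for x
  have vseq: "vs x = s0 * (-1) ^ card {i\<in>{1..N}. h i < x}" for x
    unfolding vs_def using prod_sign[of "{1..N}" "\<lambda>i. h i < x"] by simp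
  have vsm: "vs \<in> borel_measurable lborel" unfolding vs_def by measurable
  have f1m: "(\<lambda>x. indicator {a..b} x *\<^sub>R vs x) \<in> borel_measurable lborel" using vsm by measurable
  have f2m: "(\<lambda>x. indicator {a..b} x *\<^sub>R v x) \<in> borel_measurable lborel"
  proof (rule measurable_discrete_difference[OF f1m, where X = "h ` {1..N}"])
    show "countable (h ` {1..N})" by (intro countable_finite) auto
    fix x assume "x \<notin> h ` {1..N}"
    then show "indicator {a..b} x *\<^sub>R vs x = indicator {a..b} x *\<^sub>R v x"
      using vs vseq by (auto simp: indicator_def)
  qed auto
  show ?thesis unfolding set_integrable_def
  proof (rule integrableI_bounded_set[where A = "{a..b}" and B = 1, OF _ f2m])
    show "AE x in lborel. x \<in> {a..b} \<longrightarrow> norm (indicator {a..b} x *\<^sub>R v x) \<le> 1"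
      using vab by (intro AE_I2) (force simp: indicator_def)
    show "AE x in lborel. x \<notin> {a..b} \<longrightarrow> indicator {a..b} x *\<^sub>R v x = 0"
      by (auto simp: indicator_def)
    show "emeasure lborel {a..b} < \<infinity>"
    proof (cases "a \<le> b")
      case True
      then show ?thesis by simp
    next
      case False
      then have "{a..b} = {}" by simp
      then show ?thesis by simp
    qed
  qed auto
qed

lemma energy_conv:
  assumes p: "p > 1" and e: "\<epsilon> > 0" and gm: "g \<in> borel_measurable borel" and cu: "continuous_on {a..b} u"
    and fin: "energy p a b \<epsilon> u g < \<infinity>"
  shows "(\<lambda>t. ee p \<epsilon> (u t) (g t)) integrable_on {a..b}"
    "energy p a b \<epsilon> u g = ennreal (integral {a..b} (\<lambda>t. ee p \<epsilon> (u t) (g t)))"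
proof -
  define f where "f x = indicator {a..b} x *\<^sub>R ee p \<epsilon> (u x) (g x)" for x
  have f_split: "f = (\<lambda>x. indicator {a..b} x * (\<epsilon> powr (p - 1) * \<bar>g x\<bar> powr p / p) + indicator {a..b} x *\<^sub>R (Fpot p (u x) / \<epsilon>))"
    by (auto simp: f_def ee_def fun_eq_iff indicator_def)
  have m1: "(\<lambda>x. indicator {a..b} x * (\<epsilon> powr (p - 1) * \<bar>g x\<bar> powr p / p)) \<in> borel_measurable lborel"
    using gm by measurable
  have cF: "continuous_on {a..b} (\<lambda>x. Fpot p (u x) / \<epsilon>)"
    using continuous_on_compose2[OF Fpot_cont cu] p e by (intro continuous_intros) auto
  have m2: "(\<lambda>x. indicator {a..b} x *\<^sub>R (Fpot p (u x) / \<epsilon>)) \<in> borel_measurable lborel"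
    using borel_measurable_continuous_on_indicator[OF _ cF] by simp
  have fm: "f \<in> borel_measurable lborel" unfolding f_split using m1 m2 by measurable
  have fnn: "f x \<ge> 0" for x unfolding f_def using ee_nonneg[OF p e] by (simp add: indicator_def)
  have en: "energy p a b \<epsilon> u g = (\<integral>\<^sup>+ x. ennreal (f x) \<partial>lborel)"
    unfolding energy_def f_def ee_def
    by (rule nn_integral_cong) (simp add: indicator_def)
  have fint: "integrable lborel f"
  proof (rule integrableI_bounded[OF fm])
    have "(\<integral>\<^sup>+ x. ennreal (norm (f x)) \<partial>lborel) = (\<integral>\<^sup>+ x. ennreal (f x) \<partial>lborel)"
      using fnn by (intro nn_integral_cong) simp
    then show "(\<integral>\<^sup>+ x. ennreal (norm (f x)) \<partial>lborel) < \<infinity>" using fin en by simp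
  qed
  have si: "set_integrable lborel {a..b} (\<lambda>t. ee p \<epsilon> (u t) (g t))"
    using fint unfolding set_integrable_def f_def by simp
  show "(\<lambda>t. ee p \<epsilon> (u t) (g t)) integrable_on {a..b}" by (rule set_borel_integral_eq_integral(1)[OF si])
  have "energy p a b \<epsilon> u g = ennreal (integral\<^sup>L lborel f)"
    unfolding en by (rule nn_integral_eq_integral[OF fint]) (simp add: fnn)
  also have "integral\<^sup>L lborel f = (LINT t:{a..b}|lborel. ee p \<epsilon> (u t) (g t))"
    by (simp add: set_lebesgue_integral_def f_def[abs_def])
  also have "\<dots> = integral {a..b} (\<lambda>t. ee p \<epsilon> (u t) (g t))" by (rule set_borel_integral_eq_integral(2)[OF si])
  finally show "energy p a b \<epsilon> u g = ennreal (integral {a..b} (\<lambda>t. ee p \<epsilon> (u t) (g t)))" .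
qed

lemma repon_sign: "\<sigma> \<in> {-1, 1} \<Longrightarrow> repon x0 x1 u g \<Longrightarrow> repon x0 x1 (\<lambda>x. \<sigma> * u x) (\<lambda>x. \<sigma> * g x)"
  using repon_neg[of x0 x1 u g] by auto

lemma ee_sign: "\<sigma> \<in> {-1, 1} \<Longrightarrow> ee p \<epsilon> (\<sigma> * s) (\<sigma> * t) = ee p \<epsilon> s t"
  using ee_neg[of p \<epsilon> s t] by auto

lemma En_sign: "\<sigma> \<in> {-1, 1} \<Longrightarrow> En p \<epsilon> (\<lambda>x. \<sigma> * u x) (\<lambda>x. \<sigma> * g x) = En p \<epsilon> u g"
  using En_neg[of p \<epsilon> u g] by auto

lemma h_mono:
  fixes h :: "nat \<Rightarrow> real"
  assumes "\<And>i. 1 \<le> i \<Longrightarrow> i < N \<Longrightarrow> h i < h (i + 1)"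
  shows "1 \<le> i \<Longrightarrow> i \<le> j \<Longrightarrow> j \<le> N \<Longrightarrow> h i \<le> h j"
proof (induction j)
  case 0
  then show ?case by simp
next
  case (Suc j)
  show ?case
  proof (cases "i = Suc j")
    case True
    then show ?thesis by simp
  next
    case False
    then have "i \<le> j" using Suc by simp
    then have "h i \<le> h j" using Suc by simp
    also have "h j < h (j + 1)" using assms[of j] Suc \<open>i \<le> j\<close> by simp
    finally show ?thesis by simp
  qed
qed

lemma sum_En:
  fixes h :: "nat \<Rightarrow> real"
  assumes p: "p > 1" and e: "\<epsilon> > 0" and fi: "(\<lambda>t. ee p \<epsilon> (u t) (g t)) integrable_on {a..b}"
    and N: "N \<ge> 1" and a: "a \<le> h 1 - r" and b: "h N + r \<le> b" and r: "r > 0"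
    and gap: "\<And>i. 1 \<le> i \<Longrightarrow> i < N \<Longrightarrow> h i + r \<le> h (i + 1) - r"
    and mono: "\<And>i j. 1 \<le> i \<Longrightarrow> i \<le> j \<Longrightarrow> j \<le> N \<Longrightarrow> h i \<le> h j"
  shows "(\<Sum>i=1..N. En p \<epsilon> u g (h i - r) (h i + r)) \<le> En p \<epsilon> u g a b"
proof -
  have claim: "(\<Sum>i=1..m. En p \<epsilon> u g (h i - r) (h i + r)) \<le> En p \<epsilon> u g a (h m + r)"
    if "1 \<le> m" "m \<le> N" for m
    using that
  proof (induction m)
    case 0
    then show ?case by simp
  next
    case (Suc m)
    have hm: "h 1 \<le> h (Suc m)" "h (Suc m) \<le> h N" using mono Suc.prems by auto
    show ?case
    proof (cases "m = 0")
      case True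
      have fi1: "(\<lambda>t. ee p \<epsilon> (u t) (g t)) integrable_on {a..h 1 + r}"
        using integrable_subinterval_real[OF fi, of a "h 1 + r"] a b r hm by simp
      then show ?thesis using En_mono[OF p e fi1, of "h 1 - r" "h 1 + r"] a r True by simp
    next
      case False
      have IH: "(\<Sum>i=1..m. En p \<epsilon> u g (h i - r) (h i + r)) \<le> En p \<epsilon> u g a (h m + r)"
        using Suc False by simp
      have g1: "h m + r \<le> h (Suc m) - r" using gap[of m] Suc.prems False by simp
      have hm1: "h 1 \<le> h m" using mono[of 1 m] Suc.prems False by simp
      have sp1: "En p \<epsilon> u g a (h (Suc m) + r) = En p \<epsilon> u g a (h m + r) + En p \<epsilon> u g (h m + r) (h (Suc m) + r)"
        using En_split[OF fi, of a "h m + r" "h (Suc m) + r"] a b hm hm1 g1 r by simp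
      have sp2: "En p \<epsilon> u g (h m + r) (h (Suc m) + r) = En p \<epsilon> u g (h m + r) (h (Suc m) - r) + En p \<epsilon> u g (h (Suc m) - r) (h (Suc m) + r)"
        using En_split[OF fi, of "h m + r" "h (Suc m) - r" "h (Suc m) + r"] a b hm hm1 g1 r by simp
      have "0 \<le> En p \<epsilon> u g (h m + r) (h (Suc m) - r)" by (rule En_nonneg[OF p e])
      then show ?thesis using IH sp1 sp2 by simp
    qed
  qed
  have "(\<Sum>i=1..N. En p \<epsilon> u g (h i - r) (h i + r)) \<le> En p \<epsilon> u g a (h N + r)"
    using claim[of N] N by simp
  also have "\<dots> \<le> En p \<epsilon> u g a b"
    using En_mono[OF p e fi, of a "h N + r"] b a mono[of 1 N] N r by simp
  finally show ?thesis .
qed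

lemma find_app:
  fixes u v :: "real \<Rightarrow> real"
  assumes ac: "a \<le> c" and cb: "c + ll \<le> b" and ll: "ll > 0" and r: "\<rho> > 0"
    and cu: "continuous_on {a..b} u" and vI: "v integrable_on {a..b}"
    and sg: "\<sigma> \<in> {-1, 1}"
    and vc: "\<And>t. t \<in> {c..c + ll} \<Longrightarrow> v t = \<sigma>"
    and hyp: "integral {a..b} (\<lambda>x. \<bar>integral {a..x} u - integral {a..x} v\<bar>) < \<rho> * ll * ll / 18"
  shows "\<exists>t\<in>{c..c + ll}. 1 - \<rho> \<le> \<sigma> * u t"
proof (rule ccontr)
  assume "\<not> (\<exists>t\<in>{c..c + ll}. 1 - \<rho> \<le> \<sigma> * u t)"
  then have lt: "\<And>t. t \<in> {c..c + ll} \<Longrightarrow> \<sigma> * u t < 1 - \<rho>" by (auto simp: not_le)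
  define D where "D x = integral {a..x} u - integral {a..x} v" for x
  have uI: "u integrable_on {a..b}" using integrable_continuous_real[OF cu] .
  have cD: "continuous_on {a..b} D" unfolding D_def
    by (intro continuous_on_diff indefinite_integral_continuous_1 uI vI)
  have ss: "\<sigma> * \<sigma> = 1" using sg by auto
  define G where "G x = \<sigma> * D x" for x
  have cG: "continuous_on {c..c + ll} G" unfolding G_def
    using ac cb ll by (intro continuous_intros continuous_on_subset[OF cD]) auto
  have dec: "G y - G x \<le> - \<rho> * (y - x)" if xy: "c \<le> x" "x \<le> y" "y \<le> c + ll" for x y
  proof -
    have uxy: "integral {a..y} u = integral {a..x} u + integral {x..y} u"
      using xy ac cb ll integrable_subinterval_real[OF uI, of a y]
      by (intro Henstock_Kurzweil_Integration.integral_combine[symmetric]) auto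
    have vxy: "integral {a..y} v = integral {a..x} v + integral {x..y} v"
      using xy ac cb ll integrable_subinterval_real[OF vI, of a y]
      by (intro Henstock_Kurzweil_Integration.integral_combine[symmetric]) auto
    have vint: "integral {x..y} v = \<sigma> * (y - x)"
    proof -
      have "integral {x..y} v = integral {x..y} (\<lambda>_. \<sigma>)"
        using vc xy by (intro integral_cong) auto
      then show ?thesis using xy by simp
    qed
    have uint: "\<sigma> * integral {x..y} u \<le> (1 - \<rho>) * (y - x)"
    proof -
      have cxy: "continuous_on {x..y} u" using xy ac cb ll by (intro continuous_on_subset[OF cu]) auto
      have "integral {x..y} (\<lambda>t. \<sigma> * u t) \<le> integral {x..y} (\<lambda>_. 1 - \<rho>)"
        using lt xy by (intro integral_le integrable_continuous_real continuous_intros cxy) (auto simp: less_imp_le)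
      then show ?thesis using xy by (simp add: mult.commute)
    qed
    have Dd: "D y - D x = integral {x..y} u - \<sigma> * (y - x)" unfolding D_def using uxy vxy vint by simp
    have "G y - G x = \<sigma> * (D y - D x)" by (simp add: G_def right_diff_distrib)
    also have "\<dots> = \<sigma> * integral {x..y} u - \<sigma> * \<sigma> * (y - x)" unfolding Dd by (simp add: right_diff_distrib)
    finally have "G y - G x = \<sigma> * integral {x..y} u - \<sigma> * \<sigma> * (y - x)" .
    then show ?thesis using uint ss by (simp add: algebra_simps)
  qed
  have "\<rho> * ll * ll / 18 \<le> integral {c..c + ll} (\<lambda>x. \<bar>G x\<bar>)"
    by (rule find_point[OF ll r cG dec])
  also have "integral {c..c + ll} (\<lambda>x. \<bar>G x\<bar>) = integral {c..c + ll} (\<lambda>x. \<bar>D x\<bar>)"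
    using sg by (intro integral_cong) (auto simp: G_def abs_mult)
  also have "\<dots> \<le> integral {a..b} (\<lambda>x. \<bar>D x\<bar>)"
  proof -
    have cAD: "continuous_on {a..b} (\<lambda>x. \<bar>D x\<bar>)" using cD by (intro continuous_intros)
    show ?thesis using ac cb ll
      by (intro integral_subset_le integrable_continuous_real continuous_on_subset[OF cAD]) auto
  qed
  finally show False using hyp unfolding D_def by simp
qed

theorem proposition3p2:
  fixes a b p A r :: real and N :: nat and h :: "nat \<Rightarrow> real" and v :: "real \<Rightarrow> real"
  assumes "a < b" and "p > 1"
    and "N \<ge> 1"
    and "a < h 1" and "h N < b"
    and "\<And>i. 1 \<le> i \<Longrightarrow> i < N \<Longrightarrow> h i < h (i + 1)"
    and "\<And>x. x \<in> {a..b} \<Longrightarrow> v x \<in> {-1, 1}"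
    and "\<exists>s\<in>{-1, 1::real}. \<forall>x\<in>{a..b} - h ` {1..N}.
           v x = s * (-1) ^ card {i\<in>{1..N}. h i < x}"
    and "r > 0"
    and "\<And>i. 1 \<le> i \<Longrightarrow> i < N \<Longrightarrow> r < (h (i + 1) - h i) / 2"
    and "a \<le> h 1 - r" and "h N + r \<le> b"
    and "0 < A" and "A < r * sqrt 2 * lambda_const p"
  shows "\<exists>\<epsilon>0 C \<delta>. \<epsilon>0 > 0 \<and> C > 0 \<and> \<delta> > 0 \<and>
    (\<forall>u g. H1_with_deriv a b u g \<longrightarrow>
       (\<integral> x\<in>{a..b}. \<bar>prim a u x - prim a v x\<bar> \<partial>lborel) \<le> \<delta> \<longrightarrow>
       (\<forall>\<epsilon>. 0 < \<epsilon> \<and> \<epsilon> < \<epsilon>0 \<longrightarrow>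
          energy p a b \<epsilon> u g \<ge> ennreal (real N * c_const p - C * exp (- A * p / (2 * \<epsilon>)))))"
proof -
  note ab = assms(1) and p = assms(2) and N1 = assms(3) and hinc = assms(6) and vab = assms(7)
    and r = assms(9) and gap = assms(10) and ah = assms(11) and hb = assms(12) and A = assms(13) assms(14)
  obtain s0 where s0: "s0 \<in> {-1, 1}"
    and vform: "\<forall>x\<in>{a..b} - h ` {1..N}. v x = s0 * (-1) ^ card {i\<in>{1..N}. h i < x}"
    using assms(8) by blast
  define q where "q = p / (p - 1)"
  have q: "q \<ge> 1" "q > 0" using p by (auto simp: q_def field_simps)
  define lam where "lam = lambda_const p"
  have lam: "lam > 0" using p by (simp add: lam_def lambda_const_def)
  have sq2: "sqrt 2 > 0" "sqrt 2 \<le> 2" by (simp, rule real_le_lsqrt) auto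
  define \<theta> where "\<theta> = A / (r * sqrt 2 * lam)"
  have \<theta>: "0 < \<theta>" "\<theta> < 1" using A r lam sq2 by (auto simp: \<theta>_def lam_def field_simps)
  define s where "s = \<theta> powr (1/3)"
  have s: "0 < s" "s < 1" using \<theta> powr_less_mono2[of "1/3" \<theta> 1] by (auto simp: s_def)
  have s3: "s * s * s = \<theta>"
  proof -
    have "s * s * s = \<theta> powr (1/3 + 1/3 + 1/3)" unfolding s_def by (simp only: powr_add)
    also have "(1/3 + 1/3 + 1/3 :: real) = 1" by simp
    finally show ?thesis using \<theta> by simp
  qed
  define B1 where "B1 = 1 - min (1/2) ((1/s - 1) / q)"
  have spos: "1/s - 1 > 0" using s by (simp add: field_simps)
  have B1: "0 < B1" "B1 < 1" using spos q by (auto simp: B1_def min_def)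
  have qB1: "q * (1 - B1) \<le> 1/s - 1"
  proof -
    have "q * (1 - B1) \<le> q * ((1/s - 1) / q)" using q by (intro mult_left_mono) (auto simp: B1_def)
    then show ?thesis using q by simp
  qed
  define psi where "psi = (1 - B1 powr q) / (1 - B1)"
  have psi: "s * q \<le> psi"
  proof -
    have f1: "q / (1 + q * (1 - B1)) \<le> psi" unfolding psi_def by (rule psi_lower[OF q(2) B1])
    have pos1: "0 < 1 + q * (1 - B1)" using q B1 by (simp add: add_pos_nonneg)
    have pos2: "0 < (1 + q * (1 - B1)) / s" using pos1 s by simp
    have f2: "q / (1 / s) \<le> q / (1 + q * (1 - B1))"
      using qB1 q pos2 by (intro divide_left_mono) auto
    show ?thesis using f1 f2 s by (simp add: mult.commute)
  qed
  define \<rho> where "\<rho> = min (1/4) ((1 - s) / (2 * p))"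
  have \<rho>: "0 < \<rho>" "\<rho> \<le> 1/2" using s p by (auto simp: \<rho>_def)
  have \<rho>s: "s \<le> (1 - \<rho>) powr p"
  proof -
    have "2 * p * \<rho> \<le> 2 * p * ((1 - s) / (2 * p))" using p by (intro mult_left_mono) (auto simp: \<rho>_def)
    then have "2 * p * \<rho> \<le> 1 - s" using p by simp
    moreover have "1 - 2 * p * \<rho> \<le> (1 - \<rho>) powr p" using bern_powr[of p \<rho>] p \<rho> by simp
    ultimately show ?thesis by simp
  qed
  define \<tau> where "\<tau> = r * (1 - s)"
  have \<tau>: "0 < \<tau>" "\<tau> \<le> r" using r s by (auto simp: \<tau>_def mult_left_le)
  define Lm where "Lm = r * s"
  have Lm: "Lm = r - \<tau>" "Lm > 0" using r s by (auto simp: Lm_def \<tau>_def algebra_simps)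
  define R where "R = Rr p \<rho>"
  have R: "R > 0" using Rr_pos[OF p] \<rho> by (simp add: R_def)
  have B1q: "B1 powr q < 1" using powr_less_mono2[OF q(2), of B1 1] B1 by simp
  have psipos: "psi > 0" using B1q B1 by (simp add: psi_def)
  define k where "k = psi / R"
  have k: "k > 0" using psipos R by (simp add: k_def)
  have krate: "\<And>B. B1 \<le> B \<Longrightarrow> B \<le> 1 \<Longrightarrow> k * Rr p \<rho> * (1 - B) \<le> 1 - B powr q"
    using krate_convex[OF q(1) B1] R by (simp add: k_def R_def psi_def)
  have rate: "A * p / 2 \<le> k * Lm"
  proof -
    have QR: "q / R = p * lam * (1 - \<rho>) powr p"
    proof -
      have "(2 - 2 * \<rho>) powr p = 2 powr p * (1 - \<rho>) powr p"
        using powr_mult[of 2 "1 - \<rho>" p] by simp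
      moreover have "q = kphi p * (p * lam)" using kphi_lambda[OF p] by (simp add: q_def lam_def)
      ultimately show ?thesis using kphi_pos[OF p] by (simp add: R_def Rr_def field_simps)
    qed
    have "k * Lm = psi * (q / R) / q * Lm" using q by (simp add: k_def)
    also have "\<dots> = psi / q * (p * lam * (1 - \<rho>) powr p) * (r * s)" by (simp add: QR Lm_def)
    also have "\<dots> \<ge> s * (p * lam * s) * (r * s)"
    proof -
      have "s \<le> psi / q" using psi q by (simp add: field_simps)
      moreover have "p * lam * s \<le> p * lam * (1 - \<rho>) powr p" using \<rho>s p lam by (intro mult_left_mono) auto
      ultimately show ?thesis using s r p lam by (intro mult_right_mono mult_mono) auto
    qed
    finally have "s * (p * lam * s) * (r * s) \<le> k * Lm" .
    moreover have "s * (p * lam * s) * (r * s) = A * p / sqrt 2"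
    proof -
      have "s * (p * lam * s) * (r * s) = (s * s * s) * (p * lam * r)" by (simp add: algebra_simps)
      also have "\<dots> = A * p / sqrt 2" using s3 r lam sq2 by (simp add: \<theta>_def field_simps)
      finally show ?thesis .
    qed
    moreover have "A * p / 2 \<le> A * p / sqrt 2" using A p sq2 by (intro divide_left_mono) auto
    ultimately show ?thesis by linarith
  qed
  define Y1 where "Y1 = B1 * R / (1 - B1 powr q)"
  have Y1: "Y1 > 0" using B1 R B1q by (simp add: Y1_def)
  define \<epsilon>0 where "\<epsilon>0 = Lm / Y1"
  have \<epsilon>0: "\<epsilon>0 > 0" using Lm Y1 by (simp add: \<epsilon>0_def)
  define K where "K = Phi p 1 - Phi p (1 - 2 * \<rho>)"
  have K: "K \<ge> 0" unfolding K_def using Phi_mono[OF p, of "1 - 2 * \<rho>" 1] \<rho> by simp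
  define C1 where "C1 = 2 * (1 - B1) * exp (k * Y1) * K + 1"
  have C1nn: "2 * (1 - B1) * exp (k * Y1) * K \<ge> 0" using B1 K by simp
  then have C1: "C1 > 0" by (simp add: C1_def)
  define C where "C = real N * C1"
  have C: "C > 0" using C1 N1 by (simp add: C_def)
  define ll where "ll = \<tau> / 2"
  have ll: "ll > 0" using \<tau> by (simp add: ll_def)
  define \<delta> where "\<delta> = \<rho> * ll * ll / 36"
  have \<delta>: "\<delta> > 0" "\<delta> < \<rho> * ll * ll / 18" using \<rho> ll by (auto simp: \<delta>_def)
  have hmono: "\<And>i j. 1 \<le> i \<Longrightarrow> i \<le> j \<Longrightarrow> j \<le> N \<Longrightarrow> h i \<le> h j"
    using h_mono[where h = h and N = N, OF hinc] by blast
  have hgap: "h j + 2 * r < h j'" if "1 \<le> j" "j < j'" "j' \<le> N" for j j'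
  proof -
    have "h j + 2 * r < h (j + 1)" using gap[of j] that by simp
    also have "h (j + 1) \<le> h j'" using hmono[of "j + 1" j'] that by simp
    finally show ?thesis .
  qed
  have main: "energy p a b \<epsilon> u g \<ge> ennreal (real N * c_const p - C * exp (- A * p / (2 * \<epsilon>)))"
    if H: "H1_with_deriv a b u g"
      and hyp: "(\<integral> x\<in>{a..b}. \<bar>prim a u x - prim a v x\<bar> \<partial>lborel) \<le> \<delta>"
      and e: "0 < \<epsilon> \<and> \<epsilon> < \<epsilon>0" for u g \<epsilon>
  proof (cases "energy p a b \<epsilon> u g = \<infinity>")
    case True
    then show ?thesis by simp
  next
    case False
    have eps: "0 < \<epsilon>" "\<epsilon> < \<epsilon>0" using e by auto
    have ab': "a \<le> b" using ab by simp
    have rep: "repon a b u g" using H1_facts[OF H ab'] by simp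
    have cu: "continuous_on {a..b} u" using rep by (simp add: repon_def)
    have gm: "g \<in> borel_measurable borel" using H unfolding H1_with_deriv_def by blast
    have fin: "energy p a b \<epsilon> u g < \<infinity>" using False by (simp add: less_top)
    have fi: "(\<lambda>t. ee p \<epsilon> (u t) (g t)) integrable_on {a..b}"
      and en: "energy p a b \<epsilon> u g = ennreal (integral {a..b} (\<lambda>t. ee p \<epsilon> (u t) (g t)))"
      using energy_conv[OF p eps(1) gm cu fin] by auto
    have vS: "set_integrable lborel {a..b} v" by (rule v_set_integrable[OF vab vform])
    have vI: "v integrable_on {a..b}" by (rule set_borel_integral_eq_integral(1)[OF vS])
    have Vx: "prim a v x = integral {a..x} v" if "x \<in> {a..b}" for x
    proof -
      have "set_integrable lborel {a..x} v" using that by (intro set_integrable_subset[OF vS]) auto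
      then show ?thesis unfolding prim_def by (rule set_borel_integral_eq_integral(2))
    qed
    have Ux: "prim a u x = integral {a..x} u" if "x \<in> {a..b}" for x
      by (rule prim_cont_eq[OF cu that])
    have uI: "u integrable_on {a..b}" using integrable_continuous_real[OF cu] .
    have cD: "continuous_on {a..b} (\<lambda>x. \<bar>integral {a..x} u - integral {a..x} v\<bar>)"
      by (intro continuous_intros indefinite_integral_continuous_1 uI vI)
    have cD': "continuous_on {a..b} (\<lambda>x. \<bar>prim a u x - prim a v x\<bar>)"
      by (rule continuous_on_eq[OF cD]) (simp add: Ux Vx)
    have hypH: "integral {a..b} (\<lambda>x. \<bar>integral {a..x} u - integral {a..x} v\<bar>) < \<rho> * ll * ll / 18"
    proof -
      have "(\<integral> x\<in>{a..b}. \<bar>prim a u x - prim a v x\<bar> \<partial>lborel) = integral {a..b} (\<lambda>x. \<bar>prim a u x - prim a v x\<bar>)"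
        by (rule set_borel_integral_eq_integral(2)[OF borel_integrable_atLeastAtMost'[OF cD']])
      also have "\<dots> = integral {a..b} (\<lambda>x. \<bar>integral {a..x} u - integral {a..x} v\<bar>)"
        by (intro integral_cong) (simp add: Ux Vx)
      finally show ?thesis using hyp \<delta> by simp
    qed
    define E where "E = exp (- A * p / (2 * \<epsilon>))"
    have tr: "c_const p - C1 * E \<le> En p \<epsilon> u g (h i - r) (h i + r)" if i: "1 \<le> i" "i \<le> N" for i
    proof -
      define \<sigma> where "\<sigma> = s0 * (-1) ^ i"
      have \<sigma>: "\<sigma> \<in> {-1, 1}" using s0 by (cases "even i") (auto simp: \<sigma>_def)
      have m\<sigma>: "- \<sigma> \<in> {-1, 1}" using \<sigma> by auto
      have h1i: "h 1 \<le> h i" "h i \<le> h N" using hmono i by auto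
      have lo: "a \<le> h i - r" and hi: "h i + r \<le> b" using h1i ah hb by auto
      have notin: "t \<notin> h ` {1..N}" if "t \<noteq> h i" "h i - 2 * r < t" "t < h i + 2 * r" for t
      proof
        assume "t \<in> h ` {1..N}"
        then obtain j where j: "j \<in> {1..N}" "t = h j" by auto
        consider "j < i" | "j = i" | "i < j" by linarith
        then show False
        proof cases
          case 1 then show False using hgap[of j i] j i that by auto
        next
          case 2 then show False using j that by auto
        next
          case 3 then show False using hgap[of i j] j i that by auto
        qed
      qed
      have vR: "v t = \<sigma>" if t: "t \<in> {h i + ll..h i + ll + ll}" for t
      proof -
        have tt: "h i < t" "t < h i + 2 * r" using t ll \<tau> r by (auto simp: ll_def)
        have cardset: "{j \<in> {1..N}. h j < t} = {1..i}"
        proof (intro set_eqI iffI)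
          fix j assume "j \<in> {j \<in> {1..N}. h j < t}"
          then have j: "1 \<le> j" "j \<le> N" "h j < t" by auto
          show "j \<in> {1..i}"
          proof (rule ccontr)
            assume "j \<notin> {1..i}"
            then have "i < j" using j by auto
            then show False using hgap[of i j] i j tt by auto
          qed
        next
          fix j assume "j \<in> {1..i}"
          then have "1 \<le> j" "j \<le> i" by auto
          then show "j \<in> {j \<in> {1..N}. h j < t}" using hmono[of j i] i tt by auto
        qed
        have "t \<in> {a..b} - h ` {1..N}" using notin[of t] tt lo hi t r \<tau> by (auto simp: ll_def)
        then show ?thesis using vform cardset by (simp add: \<sigma>_def)
      qed
      have vL: "v t = - \<sigma>" if t: "t \<in> {h i - \<tau>..h i - \<tau> + ll}" for t
      proof -
        have tt: "h i - 2 * r < t" "t < h i" using t ll \<tau> r by (auto simp: ll_def)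
        have cardset: "{j \<in> {1..N}. h j < t} = {1..i - 1}"
        proof (intro set_eqI iffI)
          fix j assume "j \<in> {j \<in> {1..N}. h j < t}"
          then have j: "1 \<le> j" "j \<le> N" "h j < t" by auto
          show "j \<in> {1..i - 1}"
          proof (rule ccontr)
            assume "j \<notin> {1..i - 1}"
            then have "i \<le> j" using j by auto
            then show False using hmono[of i j] i j tt by auto
          qed
        next
          fix j assume "j \<in> {1..i - 1}"
          then have "1 \<le> j" "j < i" by auto
          then show "j \<in> {j \<in> {1..N}. h j < t}" using hgap[of j i] i tt by auto
        qed
        have "t \<in> {a..b} - h ` {1..N}" using notin[of t] tt lo hi t r \<tau> by (auto simp: ll_def)
        then have "v t = s0 * (-1) ^ (i - 1)" using vform cardset by simp
        moreover have "(-1::real) ^ i = - ((-1) ^ (i - 1))"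
          using i by (cases i) auto
        ultimately show ?thesis by (simp add: \<sigma>_def)
      qed
      have "\<exists>t\<in>{h i + ll..h i + ll + ll}. 1 - \<rho> \<le> \<sigma> * u t"
        by (rule find_app[OF _ _ ll \<rho>(1) cu vI \<sigma> vR hypH]) (use lo hi ll \<tau> r in \<open>auto simp: ll_def\<close>)
      then obtain z1 where z1: "z1 \<in> {h i + ll..h i + ll + ll}" "1 - \<rho> \<le> \<sigma> * u z1" by blast
      have "\<exists>t\<in>{h i - \<tau>..h i - \<tau> + ll}. 1 - \<rho> \<le> - \<sigma> * u t"
        by (rule find_app[OF _ _ ll \<rho>(1) cu vI m\<sigma> vL hypH]) (use lo hi ll \<tau> r in \<open>auto simp: ll_def\<close>)
      then obtain z0 where z0: "z0 \<in> {h i - \<tau>..h i - \<tau> + ll}" "1 - \<rho> \<le> - \<sigma> * u z0" by blast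
      have X1: "\<epsilon> * B1 * Rr p \<rho> / (1 - B1 powr (p / (p - 1))) \<le> Lm"
      proof -
        have "\<epsilon> * B1 * Rr p \<rho> / (1 - B1 powr (p / (p - 1))) = \<epsilon> * Y1"
          by (simp add: Y1_def R_def q_def)
        also have "\<dots> \<le> \<epsilon>0 * Y1" using eps Y1 by simp
        also have "\<dots> = Lm" using Y1 by (simp add: \<epsilon>0_def)
        finally show ?thesis .
      qed
      have repi: "repon (h i - r) (h i + r) (\<lambda>x. \<sigma> * u x) (\<lambda>x. \<sigma> * g x)"
        by (rule repon_sign[OF \<sigma> repon_sub[OF rep lo hi]])
      have fii: "(\<lambda>t. ee p \<epsilon> (\<sigma> * u t) (\<sigma> * g t)) integrable_on {h i - r..h i + r}"
        using integrable_subinterval_real[OF fi, of "h i - r" "h i + r"] lo hi by (simp add: ee_sign[OF \<sigma>])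
      have trans: "c_const p - 2 * ((1 - B1) * exp (- k * (Lm - \<epsilon> * B1 * Rr p \<rho> / (1 - B1 powr (p / (p - 1)))) / \<epsilon>) * (Phi p 1 - Phi p (1 - 2 * \<rho>)))
           \<le> En p \<epsilon> (\<lambda>x. \<sigma> * u x) (\<lambda>x. \<sigma> * g x) (h i - r) (h i + r)"
      proof (rule transition[OF p eps(1) \<rho> B1 k _ X1 repi fii])
        show "\<And>B. B1 \<le> B \<Longrightarrow> B \<le> 1 \<Longrightarrow> k * Rr p \<rho> * (1 - B) \<le> 1 - B powr (p / (p - 1))"
          using krate by (simp add: q_def)
        show "h i - r \<le> z0" using z0 \<tau> by auto
        show "z0 \<le> z1" using z0 z1 ll \<tau> by (auto simp: ll_def)
        show "z1 \<le> h i + r" using z1 \<tau> by (auto simp: ll_def)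
        show "Lm \<le> z0 - (h i - r)" using z0 Lm by auto
        show "Lm \<le> h i + r - z1" using z1 Lm by (auto simp: ll_def)
        show "\<sigma> * u z0 \<le> - (1 - \<rho>)" using z0 by simp
        show "1 - \<rho> \<le> \<sigma> * u z1" using z1 by simp
      qed
      have Eeq: "En p \<epsilon> (\<lambda>x. \<sigma> * u x) (\<lambda>x. \<sigma> * g x) (h i - r) (h i + r) = En p \<epsilon> u g (h i - r) (h i + r)"
        using En_sign[OF \<sigma>] by simp
      have errb: "2 * ((1 - B1) * exp (- k * (Lm - \<epsilon> * B1 * Rr p \<rho> / (1 - B1 powr (p / (p - 1)))) / \<epsilon>) * (Phi p 1 - Phi p (1 - 2 * \<rho>)))
          \<le> C1 * E"
      proof -
        have ex: "- k * (Lm - \<epsilon> * B1 * Rr p \<rho> / (1 - B1 powr (p / (p - 1)))) / \<epsilon> = k * Y1 + (- (k * Lm) / \<epsilon>)"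
          using eps by (simp add: Y1_def R_def q_def field_simps)
        have "- (k * Lm) / \<epsilon> \<le> - A * p / (2 * \<epsilon>)"
          using rate eps by (simp add: field_simps)
        then have "exp (- (k * Lm) / \<epsilon>) \<le> E" by (simp add: E_def)
        then have "2 * (1 - B1) * exp (k * Y1) * K * exp (- (k * Lm) / \<epsilon>) \<le> 2 * (1 - B1) * exp (k * Y1) * K * E"
          using C1nn by (intro mult_left_mono) auto
        also have "\<dots> \<le> C1 * E" unfolding C1_def by (simp add: E_def algebra_simps)
        finally have fin: "2 * (1 - B1) * exp (k * Y1) * K * exp (- (k * Lm) / \<epsilon>) \<le> C1 * E" .
        have ex2: "exp (- k * (Lm - \<epsilon> * B1 * Rr p \<rho> / (1 - B1 powr (p / (p - 1)))) / \<epsilon>) = exp (k * Y1) * exp (- (k * Lm) / \<epsilon>)"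
          by (simp only: ex exp_add)
        have "2 * ((1 - B1) * exp (- k * (Lm - \<epsilon> * B1 * Rr p \<rho> / (1 - B1 powr (p / (p - 1)))) / \<epsilon>) * (Phi p 1 - Phi p (1 - 2 * \<rho>)))
            = 2 * (1 - B1) * exp (k * Y1) * K * exp (- (k * Lm) / \<epsilon>)"
          unfolding ex2 K_def by (simp add: algebra_simps)
        then show ?thesis using fin by simp
      qed
      show ?thesis using trans Eeq errb by simp
    qed
    have sumb: "(\<Sum>i=1..N. En p \<epsilon> u g (h i - r) (h i + r)) \<le> En p \<epsilon> u g a b"
    proof (rule sum_En[OF p eps(1) fi N1 ah hb r])
      fix i assume "1 \<le> i" "i < N"
      then have "r < (h (i + 1) - h i) / 2" by (rule gap)
      then show "h i + r \<le> h (i + 1) - r" by simp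
    next
      show "\<And>i j. 1 \<le> i \<Longrightarrow> i \<le> j \<Longrightarrow> j \<le> N \<Longrightarrow> h i \<le> h j" by (rule hmono)
    qed
    have "real N * c_const p - C * E = (\<Sum>i=1..N. c_const p - C1 * E)"
      by (simp add: C_def algebra_simps)
    also have "\<dots> \<le> (\<Sum>i=1..N. En p \<epsilon> u g (h i - r) (h i + r))"
      by (intro sum_mono tr) auto
    also have "\<dots> \<le> En p \<epsilon> u g a b" by (rule sumb)
    finally have "real N * c_const p - C * E \<le> integral {a..b} (\<lambda>t. ee p \<epsilon> (u t) (g t))"
      by (simp add: En_def)
    then show ?thesis unfolding en E_def by (simp add: ennreal_leI)
  qed

  show ?thesis
    apply (rule exI[of _ \<epsilon>0], rule exI[of _ C], rule exI[of _ \<delta>])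
    using \<epsilon>0 C \<delta>(1) main by blast
qed

end
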